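(* For any $\mathbf s\ge\mathbf0$ let $D(\mathbf s)=[\mathbf0,\mathbf s]=\{\mathbf t:\mathbf0\le\mathbf t\le\mathbf s\}$. For $1\le i\le m$ and any $\mathbf s\ge\mathbf0$, $$\sup_{\mathbf t\in D(\mathbf s)}\Big|\frac1{\tilde N^\nu_i}X^\nu_i(\mathbf t)-r_i(\mathbf t)\Big|\xrightarrow{p}0\quad\text{as }\nu\to\infty,$$ and thus $\sup_{\mathbf t\in D(\mathbf s)}|\mathbf X^\nu(\mathbf t)(N^\nu\Pi)^{-1}-\mathbf r(\mathbf t)|\xrightarrow{p}0$ as $\nu\to\infty$.
   Context: Fix $m\ge1$; vectors are row vectors, inequalities componentwise; $[x]$ is the integer part, sums over $1\le l\le x$ mean $1\le l\le[x]$; $|\cdot|$ the Euclidean norm. For each $\nu\ge1$: integers $N^\nu_i\ge1$, $N^\nu=\sum_iN^\nu_i$; constants $\pi_i>0$; $\pi^\nu_i=N^\nu_i/N^\nu$; $\Pi=\mathrm{diag}(\pi_1,\dots,\pi_m)$; $\tilde N^\nu_i=N^\nu\pi_i$; random vectors $\mathbf V^\nu_k\in[0,1]^m$; independent $\mathbf V^\nu_{(k,l)}\sim\mathbf V^\nu_k$ ($1\le k\le m$, $l\ge1$). Individuals $(i,j)$, $1\le j\le N^\nu_i$; conditionally on the $\mathbf V^\nu_{(k,l)}$, the events "infective $(k,l)$ contacts $(i,j)$" are independent with probabilities $V^\nu_{(k,l),i}$. For $\mathbf t\ge\mathbf0$, $\chi^\nu_{i,j}(\mathbf t)=1$ if $(i,j)$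 is contacted by some $(k,l)$ with $l\le t_k\tilde N^\nu_k$, else $0$; $X^\nu_i(\mathbf t)=\sum_{j=1}^{N^\nu_i}\chi^\nu_{i,j}(\mathbf t)$, $\mathbf X^\nu=(X^\nu_1,\dots,X^\nu_m)$. $\mu^\nu_{ik}=\mathbb E[V^\nu_{i,k}]$, $\lambda^\nu_{ikk}=\mathrm{var}(V^\nu_{i,k})$. Standing assumptions: as $\nu\to\infty$, $N^\nu\to\infty$, $\pi^\nu_i\to\pi_i$, and there are constants $\mu_{ik}\in[0,\infty)$ with $N^\nu\mu^\nu_{ik}\to\mu_{ik}$ and $N^\nu\lambda^\nu_{ikk}\to0$. $r_i(\mathbf t)=1-\exp(-\sum_{k=1}^mt_k\pi_k\mu_{ki})$, $\mathbf r=(r_1,\dots,r_m)$. *)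

theory Defs
  imports "HOL-Probability.Probability"
begin

text \<open>Types and components are indexed by 1..m. Vectors are functions
  nat \<Rightarrow> real, only the components in 1..m matter.
  V nu k l i : component i of the random vector V^nu_(k,l) (infective (k,l)).
  C nu k l i j : the event "infective (k,l) contacts individual (i,j)".\<close>

definition Ntot :: "nat \<Rightarrow> (nat \<Rightarrow> nat \<Rightarrow> nat) \<Rightarrow> nat \<Rightarrow> nat" where
  "Ntot m N nu = (\<Sum>i\<in>{1..m}. N nu i)"

definition Ntil :: "nat \<Rightarrow> (nat \<Rightarrow> nat \<Rightarrow> nat) \<Rightarrow> (nat \<Rightarrow> real) \<Rightarrow> nat \<Rightarrow> nat \<Rightarrow> real" where
  "Ntil m N \<pi> nu i = real (Ntot m N nu) * \<pi> i"

definition chi :: "nat \<Rightarrow> (nat \<Rightarrow> nat \<Rightarrow> nat) \<Rightarrow> (nat \<Rightarrow> real)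
    \<Rightarrow> (nat \<Rightarrow> nat \<Rightarrow> nat \<Rightarrow> nat \<Rightarrow> nat \<Rightarrow> 'a \<Rightarrow> bool)
    \<Rightarrow> nat \<Rightarrow> nat \<Rightarrow> nat \<Rightarrow> (nat \<Rightarrow> real) \<Rightarrow> 'a \<Rightarrow> bool" where
  "chi m N \<pi> C nu i j t \<omega> =
     (\<exists>k\<in>{1..m}. \<exists>l\<in>{1..nat \<lfloor>t k * Ntil m N \<pi> nu k\<rfloor>}. C nu k l i j \<omega>)"

definition Xcount :: "nat \<Rightarrow> (nat \<Rightarrow> nat \<Rightarrow> nat) \<Rightarrow> (nat \<Rightarrow> real)
    \<Rightarrow> (nat \<Rightarrow> nat \<Rightarrow> nat \<Rightarrow> nat \<Rightarrow> nat \<Rightarrow> 'a \<Rightarrow> bool)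
    \<Rightarrow> nat \<Rightarrow> nat \<Rightarrow> (nat \<Rightarrow> real) \<Rightarrow> 'a \<Rightarrow> real" where
  "Xcount m N \<pi> C nu i t \<omega> = real (card {j\<in>{1..N nu i}. chi m N \<pi> C nu i j t \<omega>})"

definition rfun :: "nat \<Rightarrow> (nat \<Rightarrow> real) \<Rightarrow> (nat \<Rightarrow> nat \<Rightarrow> real) \<Rightarrow> nat \<Rightarrow> (nat \<Rightarrow> real) \<Rightarrow> real" where
  "rfun m \<pi> \<mu> i t = 1 - exp (- (\<Sum>k\<in>{1..m}. t k * \<pi> k * \<mu> k i))"

definition Dbox :: "nat \<Rightarrow> (nat \<Rightarrow> real) \<Rightarrow> (nat \<Rightarrow> real) set" where
  "Dbox m s = {t. \<forall>k\<in>{1..m}. 0 \<le> t k \<and> t k \<le> s k}"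

definition Vvec :: "nat \<Rightarrow> (nat \<Rightarrow> nat \<Rightarrow> nat \<Rightarrow> nat \<Rightarrow> 'a \<Rightarrow> real) \<Rightarrow> nat \<Rightarrow> nat \<Rightarrow> nat \<Rightarrow> 'a \<Rightarrow> (nat \<Rightarrow> real)" where
  "Vvec m V nu k l \<omega> = restrict (\<lambda>i. V nu k l i \<omega>) {1..m}"

text \<open>The model for a fixed nu on the probability space Mnu:
  V in [0,1]^m, measurable; the vectors V_(k,l) are independent, and V_(k,l) has the
  same law as V_(k,1) (the law of V^nu_k); contact events are measurable and,
  conditionally on all V's, independent with probabilities V_(k,l),i. The conditional
  statement is expressed by its defining identity on the pi-system of finite
  intersections of events of the form {V_(k,l),i \<in> B}.\<close>
definition epidemic_model :: "nat \<Rightarrow> (nat \<Rightarrow> nat \<Rightarrow> nat) \<Rightarrow> 'a measure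
    \<Rightarrow> (nat \<Rightarrow> nat \<Rightarrow> nat \<Rightarrow> nat \<Rightarrow> 'a \<Rightarrow> real)
    \<Rightarrow> (nat \<Rightarrow> nat \<Rightarrow> nat \<Rightarrow> nat \<Rightarrow> nat \<Rightarrow> 'a \<Rightarrow> bool) \<Rightarrow> nat \<Rightarrow> bool" where
  "epidemic_model m N Mnu V C nu \<longleftrightarrow>
     prob_space Mnu \<and>
     (\<forall>k\<in>{1..m}. \<forall>l\<ge>1. \<forall>i\<in>{1..m}.
        V nu k l i \<in> borel_measurable Mnu \<and> (\<forall>\<omega>\<in>space Mnu. 0 \<le> V nu k l i \<omega> \<and> V nu k l i \<omega> \<le> 1)) \<and>
     prob_space.indep_vars Mnu (\<lambda>_. PiM {1..m} (\<lambda>_. borel))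
        (\<lambda>(k,l). Vvec m V nu k l) ({1..m} \<times> {1..}) \<and>
     (\<forall>k\<in>{1..m}. \<forall>l\<ge>1.
        distr Mnu (PiM {1..m} (\<lambda>_. borel)) (Vvec m V nu k l)
          = distr Mnu (PiM {1..m} (\<lambda>_. borel)) (Vvec m V nu k 1)) \<and>
     (\<forall>k\<in>{1..m}. \<forall>l\<ge>1. \<forall>i\<in>{1..m}. \<forall>j\<in>{1..N nu i}.
        {\<omega>\<in>space Mnu. C nu k l i j \<omega>} \<in> sets Mnu) \<and>
     (\<forall>F G B a.
        finite F \<longrightarrow> F \<subseteq> {(k,l,i,j). k\<in>{1..m} \<and> l \<ge> 1 \<and> i\<in>{1..m} \<and> j\<in>{1..N nu i}} \<longrightarrow>
        finite G \<longrightarrow> G \<subseteq> {(k,l,i). k\<in>{1..m} \<and> l \<ge> 1 \<and> i\<in>{1..m}} \<longrightarrow>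
        (\<forall>g\<in>G. B g \<in> sets borel) \<longrightarrow>
        measure Mnu {\<omega>\<in>space Mnu. (\<forall>(k,l,i)\<in>G. V nu k l i \<omega> \<in> B (k,l,i)) \<and>
                                   (\<forall>(k,l,i,j)\<in>F. C nu k l i j \<omega> = a (k,l,i,j))}
        = (\<integral>\<omega>. indicator {\<omega>\<in>space Mnu. \<forall>(k,l,i)\<in>G. V nu k l i \<omega> \<in> B (k,l,i)} \<omega> *
              (\<Prod>(k,l,i,j)\<in>F. if a (k,l,i,j) then V nu k l i \<omega> else 1 - V nu k l i \<omega>) \<partial>Mnu))"

definition conv_prob_zero :: "(nat \<Rightarrow> 'a measure) \<Rightarrow> (nat \<Rightarrow> 'a \<Rightarrow> real) \<Rightarrow> bool" where
  "conv_prob_zero M Y \<longleftrightarrow>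
     (\<forall>\<epsilon>>0. (\<forall>nu. {\<omega>\<in>space (M nu). \<epsilon> < \<bar>Y nu \<omega>\<bar>} \<in> sets (M nu)) \<and>
             (\<lambda>nu. measure (M nu) {\<omega>\<in>space (M nu). \<epsilon> < \<bar>Y nu \<omega>\<bar>}) \<longlonglongrightarrow> 0)"

end

theory Submission
  imports Defs
begin

lemma pow_lim:
  fixes a :: "nat \<Rightarrow> real" and n :: "nat \<Rightarrow> nat"
  assumes a01: "\<And>nu. 0 \<le> a nu" "\<And>nu. a nu \<le> 1"
    and a0: "a \<longlonglongrightarrow> 0"
    and na: "(\<lambda>nu. real (n nu) * a nu) \<longlonglongrightarrow> c"
  shows "(\<lambda>nu. (1 - a nu) ^ n nu) \<longlonglongrightarrow> exp (- c)"
proof -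
  have ev: "eventually (\<lambda>nu. a nu \<le> 1/2) sequentially"
    using a0 by (auto simp: tendsto_iff dist_real_def eventually_mono[where P="\<lambda>nu. \<bar>a nu - 0\<bar> < 1/2"] elim!: allE[where x="1/2"] eventually_mono)
  have lim1: "(\<lambda>nu. - (real (n nu) * a nu)) \<longlonglongrightarrow> - c" using na by (intro tendsto_intros)
  have lim2: "(\<lambda>nu. - (real (n nu) * a nu) - 2 * ((real (n nu) * a nu) * a nu)) \<longlonglongrightarrow> - c - 2 * (c * 0)"
    using na a0 by (intro tendsto_intros)
  have lnlim: "(\<lambda>nu. real (n nu) * ln (1 - a nu)) \<longlonglongrightarrow> - c"
  proof (rule tendsto_sandwich[OF _ _ _ lim1])
    show "eventually (\<lambda>nu. - (real (n nu) * a nu) - 2 * ((real (n nu) * a nu) * a nu) \<le> real (n nu) * ln (1 - a nu)) sequentially"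
      using ev
    proof (rule eventually_mono)
      fix nu assume h: "a nu \<le> 1/2"
      have "- a nu - 2 * (a nu)\<^sup>2 \<le> ln (1 - a nu)" using ln_one_minus_pos_lower_bound[OF a01(1) h] .
      then have "real (n nu) * (- a nu - 2 * (a nu)\<^sup>2) \<le> real (n nu) * ln (1 - a nu)"
        by (intro mult_left_mono) auto
      then show "- (real (n nu) * a nu) - 2 * ((real (n nu) * a nu) * a nu) \<le> real (n nu) * ln (1 - a nu)"
        by (simp add: algebra_simps power2_eq_square)
    qed
    show "eventually (\<lambda>nu. real (n nu) * ln (1 - a nu) \<le> - (real (n nu) * a nu)) sequentially"
      using ev
    proof (rule eventually_mono)
      fix nu assume h: "a nu \<le> 1/2"
      have "ln (1 - a nu) \<le> - a nu" using ln_le_minus_one[of "1 - a nu"] h by auto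
      then show "real (n nu) * ln (1 - a nu) \<le> - (real (n nu) * a nu)"
        using mult_left_mono[of "ln (1 - a nu)" "- a nu" "real (n nu)"] by auto
    qed
    show "(\<lambda>nu. - (real (n nu) * a nu) - 2 * ((real (n nu) * a nu) * a nu)) \<longlonglongrightarrow> - c"
      using lim2 by simp
  qed
  have "(\<lambda>nu. exp (real (n nu) * ln (1 - a nu))) \<longlonglongrightarrow> exp (- c)"
    using lnlim by (intro tendsto_intros)
  then show ?thesis
  proof (rule Lim_transform_eventually)
    show "eventually (\<lambda>nu. exp (real (n nu) * ln (1 - a nu)) = (1 - a nu) ^ n nu) sequentially"
      using ev
    proof (rule eventually_mono)
      fix nu assume h: "a nu \<le> 1/2"
      then have "0 < 1 - a nu" by simp
      then show "exp (real (n nu) * ln (1 - a nu)) = (1 - a nu) ^ n nu"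
        by (simp add: exp_of_nat_mult)
    qed
  qed
qed

lemma second_moment:
  fixes M :: "'a measure" and A :: "'j \<Rightarrow> 'a set"
  assumes P: "prob_space M" and J: "finite J" "card J = n" "n > 0"
    and Ameas: "\<And>j. j \<in> J \<Longrightarrow> A j \<in> sets M"
    and Aq: "\<And>j. j \<in> J \<Longrightarrow> measure M (A j) = q"
    and Aq2: "\<And>j j'. j \<in> J \<Longrightarrow> j' \<in> J \<Longrightarrow> j \<noteq> j' \<Longrightarrow> measure M (A j \<inter> A j') = q2"
    and d: "\<delta> > 0" and q2: "0 \<le> q2"
  shows "measure M {\<omega>\<in>space M. \<delta> < \<bar>real (card {j\<in>J. \<omega> \<in> A j}) / n - q\<bar>}
          \<le> (1 / n + (q2 - q\<^sup>2)) / \<delta>\<^sup>2"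
proof -
  interpret prob_space M by (rule P)
  define S where "S \<omega> = (\<Sum>j\<in>J. indicator (A j) \<omega> :: real)" for \<omega>
  have Sc: "real (card {j\<in>J. \<omega> \<in> A j}) = S \<omega>" for \<omega>
  proof -
    have "S \<omega> = (\<Sum>j\<in>J. if \<omega> \<in> A j then 1 else 0)"
      unfolding S_def by (intro sum.cong) (auto simp: indicator_def)
    also have "\<dots> = (\<Sum>j\<in>{j\<in>J. \<omega> \<in> A j}. 1)" using J(1) by (rule sum.inter_filter[symmetric])
    finally show ?thesis by simp
  qed
  have Smeas[measurable]: "S \<in> borel_measurable M"
    unfolding S_def using Ameas by (intro borel_measurable_sum) auto
  have intI: "integrable M (indicator B :: 'a \<Rightarrow> real)" if "B \<in> sets M" for B
    using that by (intro integrable_real_indicator) (auto simp: emeasure_eq_measure)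
  have q1: "q \<le> 1"
  proof -
    obtain j where "j \<in> J" using J by (metis card_gt_0_iff ex_in_conv)
    then show ?thesis using Aq[of j] by (metis prob_le_1)
  qed
  have q0: "0 \<le> q"
  proof -
    obtain j where "j \<in> J" using J by (metis card_gt_0_iff ex_in_conv)
    then show ?thesis using Aq[of j] by (metis measure_nonneg)
  qed
  have S2: "(S \<omega>)\<^sup>2 = (\<Sum>j\<in>J. \<Sum>j'\<in>J. indicator (A j \<inter> A j') \<omega>)" for \<omega>
    unfolding S_def power2_eq_square sum_product
    by (intro sum.cong refl) (simp add: indicator_inter_arith)
  have intS: "integrable M S" unfolding S_def using Ameas intI by auto
  have intS2: "integrable M (\<lambda>\<omega>. (S \<omega>)\<^sup>2)" unfolding S2 using Ameas intI by auto
  have ES: "(\<integral>\<omega>. S \<omega> \<partial>M) = n * q"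
  proof -
    have "(\<integral>\<omega>. S \<omega> \<partial>M) = (\<Sum>j\<in>J. measure M (A j))"
      unfolding S_def using Ameas intI by (subst Bochner_Integration.integral_sum) (auto simp: Int_absorb2 sets.sets_into_space)
    also have "\<dots> = n * q" using Aq J by simp
    finally show ?thesis .
  qed
  have ES2: "(\<integral>\<omega>. (S \<omega>)\<^sup>2 \<partial>M) = n * (q + (n - 1) * q2)"
  proof -
    have "(\<integral>\<omega>. (S \<omega>)\<^sup>2 \<partial>M) = (\<Sum>j\<in>J. \<Sum>j'\<in>J. measure M (A j \<inter> A j'))"
      unfolding S2 using Ameas intI by (subst Bochner_Integration.integral_sum, auto simp: Int_absorb2 sets.sets_into_space)+
    also have "\<dots> = (\<Sum>j\<in>J. q + (n - 1) * q2)"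
    proof (rule sum.cong[OF refl])
      fix j assume j: "j \<in> J"
      have "(\<Sum>j'\<in>J. measure M (A j \<inter> A j')) = measure M (A j \<inter> A j) + (\<Sum>j'\<in>J - {j}. measure M (A j \<inter> A j'))"
        using J j by (simp add: sum.remove)
      also have "\<dots> = q + (\<Sum>j'\<in>J - {j}. q2)"
        using Aq[OF j] Aq2 j by (intro arg_cong2[where f="(+)"] sum.cong) auto
      also have "\<dots> = q + (n - 1) * q2" using J j by (simp add: of_nat_diff)
      finally show "(\<Sum>j'\<in>J. measure M (A j \<inter> A j')) = q + (n - 1) * q2" .
    qed
    also have "\<dots> = n * (q + (n - 1) * q2)" using J by simp
    finally show ?thesis .
  qed
  define Z where "Z \<omega> = (S \<omega> - n * q)\<^sup>2" for \<omega>
  have intZ: "integrable M Z"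
    unfolding Z_def power2_diff using intS intS2 by auto
  have EZ: "(\<integral>\<omega>. Z \<omega> \<partial>M) = n * q + n * (n - 1) * q2 - n^2 * q^2"
  proof -
    have Zf: "Z = (\<lambda>\<omega>. ((S \<omega>)\<^sup>2 - (2 * (n * q)) * S \<omega>) + (n * q)\<^sup>2)"
      by (auto simp: Z_def power2_diff fun_eq_iff algebra_simps)
    have "(\<integral>\<omega>. Z \<omega> \<partial>M) = (\<integral>\<omega>. ((S \<omega>)\<^sup>2 - (2 * (n * q)) * S \<omega>) \<partial>M) + (n * q)\<^sup>2"
      unfolding Zf using intS intS2 by (subst Bochner_Integration.integral_add) (auto simp: prob_space)
    also have "\<dots> = (\<integral>\<omega>. (S \<omega>)\<^sup>2 \<partial>M) - (2 * (n * q)) * (\<integral>\<omega>. S \<omega> \<partial>M) + (n * q)\<^sup>2"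
      using intS intS2 by (subst Bochner_Integration.integral_diff) auto
    also have "\<dots> = n * (q + (n - 1) * q2) - 2 * (n * q) * (n * q) + (n * q)\<^sup>2"
      using ES ES2 by simp
    finally show ?thesis using J by (simp add: algebra_simps power2_eq_square of_nat_diff)
  qed
  have EZb: "(\<integral>\<omega>. Z \<omega> \<partial>M) \<le> n + n^2 * (q2 - q^2)"
  proof -
    have "n * q \<le> n" using q1 by (simp add: mult_left_le)
    moreover have "n * (n - 1) * q2 \<le> n^2 * q2"
      using q2 by (intro mult_right_mono) (auto simp: power2_eq_square algebra_simps)
    ultimately show ?thesis unfolding EZ by (simp add: algebra_simps)
  qed
  have npos: "(0::real) < n" using J by simp
  have "measure M {\<omega>\<in>space M. \<delta> < \<bar>real (card {j\<in>J. \<omega> \<in> A j}) / n - q\<bar>}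
       \<le> measure M {\<omega>\<in>space M. (\<delta> * n)\<^sup>2 \<le> Z \<omega>}"
  proof (rule finite_measure_mono)
    show "{\<omega>\<in>space M. (\<delta> * n)\<^sup>2 \<le> Z \<omega>} \<in> sets M" unfolding Z_def by measurable
    show "{\<omega>\<in>space M. \<delta> < \<bar>real (card {j\<in>J. \<omega> \<in> A j}) / n - q\<bar>} \<subseteq> {\<omega>\<in>space M. (\<delta> * n)\<^sup>2 \<le> Z \<omega>}"
    proof safe
      fix \<omega> assume "\<omega> \<in> space M" "\<delta> < \<bar>real (card {j\<in>J. \<omega> \<in> A j}) / n - q\<bar>"
      then have "\<delta> < \<bar>S \<omega> / n - q\<bar>" by (simp add: Sc)
      also have "S \<omega> / n - q = (S \<omega> - n * q) / n" using npos by (simp add: field_simps)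
      finally have "\<delta> * n < \<bar>S \<omega> - n * q\<bar>" using npos by (simp add: field_simps)
      then have "(\<delta> * n)\<^sup>2 \<le> \<bar>S \<omega> - n * q\<bar>\<^sup>2" using d npos
        by (intro power_mono) auto
      then show "(\<delta> * n)\<^sup>2 \<le> Z \<omega>" by (simp add: Z_def)
    qed
  qed
  also have "\<dots> \<le> (\<integral>\<omega>. Z \<omega> \<partial>M) / (\<delta> * n)\<^sup>2"
    using intZ d npos by (intro integral_Markov_inequality_measure[where A="space M"]) (auto simp: Z_def[abs_def])
  also have "\<dots> \<le> (n + n^2 * (q2 - q^2)) / (\<delta> * n)\<^sup>2"
    using EZb d npos by (intro divide_right_mono) auto
  also have "\<dots> = (1 / n + (q2 - q\<^sup>2)) / \<delta>\<^sup>2"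
    using npos d by (simp add: field_simps power2_eq_square)
  finally show ?thesis .
qed

lemma model_prob: "epidemic_model m N M V C nu \<Longrightarrow> prob_space M"
  unfolding epidemic_model_def apply (drule conjunct1) apply assumption done

lemma model_Vall: "epidemic_model m N M V C nu \<Longrightarrow> (\<forall>k\<in>{1..m}. \<forall>l\<ge>1. \<forall>i\<in>{1..m}.
        V nu k l i \<in> borel_measurable M \<and> (\<forall>\<omega>\<in>space M. 0 \<le> V nu k l i \<omega> \<and> V nu k l i \<omega> \<le> 1))"
  unfolding epidemic_model_def apply (drule conjunct2, drule conjunct1) apply assumption done

lemma model_Vmeas: "epidemic_model m N M V C nu \<Longrightarrow> k \<in> {1..m} \<Longrightarrow> l \<ge> 1 \<Longrightarrow> i \<in> {1..m}
   \<Longrightarrow> V nu k l i \<in> borel_measurable M"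
  by (drule model_Vall) simp

lemma model_V01: "epidemic_model m N M V C nu \<Longrightarrow> k \<in> {1..m} \<Longrightarrow> l \<ge> 1 \<Longrightarrow> i \<in> {1..m}
   \<Longrightarrow> \<omega> \<in> space M \<Longrightarrow> 0 \<le> V nu k l i \<omega> \<and> V nu k l i \<omega> \<le> 1"
  by (drule model_Vall) simp

lemma model_indep: "epidemic_model m N M V C nu \<Longrightarrow>
   prob_space.indep_vars M (\<lambda>_. PiM {1..m} (\<lambda>_. borel)) (\<lambda>(k,l). Vvec m V nu k l) ({1..m} \<times> {1..})"
  unfolding epidemic_model_def apply (drule conjunct2, drule conjunct2, drule conjunct1) apply assumption done

lemma model_distr_all: "epidemic_model m N M V C nu \<Longrightarrow> (\<forall>k\<in>{1..m}. \<forall>l\<ge>1.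
        distr M (PiM {1..m} (\<lambda>_. borel)) (Vvec m V nu k l)
          = distr M (PiM {1..m} (\<lambda>_. borel)) (Vvec m V nu k 1))"
  unfolding epidemic_model_def apply (drule conjunct2, drule conjunct2, drule conjunct2, drule conjunct1) apply assumption done

lemma model_distr: "epidemic_model m N M V C nu \<Longrightarrow> k \<in> {1..m} \<Longrightarrow> l \<ge> 1 \<Longrightarrow>
   distr M (PiM {1..m} (\<lambda>_. borel)) (Vvec m V nu k l) = distr M (PiM {1..m} (\<lambda>_. borel)) (Vvec m V nu k 1)"
  by (drule model_distr_all) blast

lemma model_Call: "epidemic_model m N M V C nu \<Longrightarrow> (\<forall>k\<in>{1..m}. \<forall>l\<ge>1. \<forall>i\<in>{1..m}. \<forall>j\<in>{1..N nu i}.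
        {\<omega>\<in>space M. C nu k l i j \<omega>} \<in> sets M)"
  unfolding epidemic_model_def apply (drule conjunct2, drule conjunct2, drule conjunct2, drule conjunct2, drule conjunct1) apply assumption done

lemma model_Cmeas: "epidemic_model m N M V C nu \<Longrightarrow> k \<in> {1..m} \<Longrightarrow> l \<ge> 1 \<Longrightarrow> i \<in> {1..m}
   \<Longrightarrow> j \<in> {1..N nu i} \<Longrightarrow> {\<omega>\<in>space M. C nu k l i j \<omega>} \<in> sets M"
  by (drule model_Call) simp

lemma model_condall: "epidemic_model m N M V C nu \<Longrightarrow> (\<forall>F G B a.
        finite F \<longrightarrow> F \<subseteq> {(k,l,i,j). k\<in>{1..m} \<and> l \<ge> 1 \<and> i\<in>{1..m} \<and> j\<in>{1..N nu i}} \<longrightarrow>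
        finite G \<longrightarrow> G \<subseteq> {(k,l,i). k\<in>{1..m} \<and> l \<ge> 1 \<and> i\<in>{1..m}} \<longrightarrow>
        (\<forall>g\<in>G. B g \<in> sets borel) \<longrightarrow>
        measure M {\<omega>\<in>space M. (\<forall>(k,l,i)\<in>G. V nu k l i \<omega> \<in> B (k,l,i)) \<and>
                                   (\<forall>(k,l,i,j)\<in>F. C nu k l i j \<omega> = a (k,l,i,j))}
        = (\<integral>\<omega>. indicator {\<omega>\<in>space M. \<forall>(k,l,i)\<in>G. V nu k l i \<omega> \<in> B (k,l,i)} \<omega> *
              (\<Prod>(k,l,i,j)\<in>F. if a (k,l,i,j) then V nu k l i \<omega> else 1 - V nu k l i \<omega>) \<partial>M))"
  unfolding epidemic_model_def apply (drule conjunct2, drule conjunct2, drule conjunct2, drule conjunct2, drule conjunct2) apply assumption done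

lemma model_cond: "epidemic_model m N M V C nu \<Longrightarrow> finite F \<Longrightarrow>
   F \<subseteq> {(k,l,i,j). k\<in>{1..m} \<and> l \<ge> 1 \<and> i\<in>{1..m} \<and> j\<in>{1..N nu i}} \<Longrightarrow>
   measure M {\<omega>\<in>space M. (\<forall>(k,l,i,j)\<in>F. C nu k l i j \<omega> = a (k,l,i,j))}
        = (\<integral>\<omega>. (\<Prod>(k,l,i,j)\<in>F. if a (k,l,i,j) then V nu k l i \<omega> else 1 - V nu k l i \<omega>) \<partial>M)"
proof -
  assume mo: "epidemic_model m N M V C nu" and F: "finite F"
    "F \<subseteq> {(k,l,i,j). k\<in>{1..m} \<and> l \<ge> 1 \<and> i\<in>{1..m} \<and> j\<in>{1..N nu i}}"
  have "measure M {\<omega>\<in>space M. (\<forall>(k,l,i)\<in>{}. V nu k l i \<omega> \<in> (\<lambda>_. UNIV) (k,l,i)) \<and>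
                                   (\<forall>(k,l,i,j)\<in>F. C nu k l i j \<omega> = a (k,l,i,j))}
        = (\<integral>\<omega>. indicator {\<omega>\<in>space M. \<forall>(k,l,i)\<in>{}. V nu k l i \<omega> \<in> (\<lambda>_. UNIV) (k,l,i)} \<omega> *
              (\<Prod>(k,l,i,j)\<in>F. if a (k,l,i,j) then V nu k l i \<omega> else 1 - V nu k l i \<omega>) \<partial>M)"
    using model_condall[OF mo] F by (elim allE[where x=F] allE[where x="{}"] allE[where x="\<lambda>_. UNIV"] allE[where x=a]) simp
  also have "\<dots> = (\<integral>\<omega>. (\<Prod>(k,l,i,j)\<in>F. if a (k,l,i,j) then V nu k l i \<omega> else 1 - V nu k l i \<omega>) \<partial>M)"
    by (intro Bochner_Integration.integral_cong) auto
  finally show ?thesis by simp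
qed

lemma prod_V_integral:
  fixes h :: "real \<Rightarrow> real"
  assumes mo: "epidemic_model m N M V C nu" and i: "i \<in> {1..m}"
    and hm: "h \<in> borel_measurable borel" and hb: "\<And>x. 0 \<le> x \<Longrightarrow> x \<le> 1 \<Longrightarrow> \<bar>h x\<bar> \<le> 1"
  shows "(\<integral>\<omega>. (\<Prod>(k,l)\<in>Sigma {1..m} (\<lambda>k. {1..\<kappa> k}). h (V nu k l i \<omega>)) \<partial>M)
          = (\<Prod>k\<in>{1..m}. (\<integral>\<omega>. h (V nu k 1 i \<omega>) \<partial>M) ^ \<kappa> k)"
proof -
  interpret prob_space M using mo by (rule model_prob)
  define S where "S = Sigma {1..m} (\<lambda>k. {1..\<kappa> k})"
  have S: "finite S" "S \<subseteq> {1..m} \<times> {1..}" unfolding S_def by auto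
  have ind0: "indep_vars (\<lambda>_. borel) (\<lambda>kl x. (\<lambda>v. h (v i)) ((\<lambda>(k,l). Vvec m V nu k l) kl x)) ({1..m} \<times> {1..})"
  proof (rule indep_vars_compose2[OF model_indep[OF mo]])
    fix kl assume "kl \<in> {1..m} \<times> ({1..}::nat set)"
    show "(\<lambda>v. h (v i)) \<in> borel_measurable (PiM {1..m} (\<lambda>_. borel))"
      using i hm by measurable
  qed
  have ind: "indep_vars (\<lambda>_. borel) (\<lambda>kl \<omega>. case kl of (k,l) \<Rightarrow> h (V nu k l i \<omega>)) S"
    using indep_vars_subset[OF ind0 S(2)]
    by (rule iffD1[OF indep_vars_cong, rotated 3]) (use i in \<open>auto simp: Vvec_def fun_eq_iff\<close>)
  have Vm: "V nu k l i \<in> borel_measurable M" if "k \<in> {1..m}" "l \<ge> 1" for k l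
    using model_Vmeas[OF mo that i] .
  have intg: "integrable M (\<lambda>\<omega>. h (V nu k l i \<omega>))" if "k \<in> {1..m}" "l \<ge> 1" for k l
  proof (rule integrable_const_bound[where B=1])
    show "AE x in M. norm (h (V nu k l i x)) \<le> 1"
      using model_V01[OF mo that i] hb by (auto intro!: AE_I2)
    show "(\<lambda>\<omega>. h (V nu k l i \<omega>)) \<in> borel_measurable M"
      using Vm[OF that] hm by measurable
  qed
  have Vvm: "Vvec m V nu k l \<in> measurable M (PiM {1..m} (\<lambda>_. borel))" if "k \<in> {1..m}" "l \<ge> 1" for k l
    unfolding Vvec_def using model_Vmeas[OF mo that] by (intro measurable_restrict) auto
  have same: "(\<integral>\<omega>. h (V nu k l i \<omega>) \<partial>M) = (\<integral>\<omega>. h (V nu k 1 i \<omega>) \<partial>M)" if "k \<in> {1..m}" "l \<ge> 1" for k l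
  proof -
    have hv: "(\<lambda>v. h (v i)) \<in> borel_measurable (PiM {1..m} (\<lambda>_. borel))"
      using i hm by measurable
    have "(\<integral>\<omega>. h (V nu k l i \<omega>) \<partial>M) = (\<integral>\<omega>. h (Vvec m V nu k l \<omega> i) \<partial>M)"
      using i by (simp add: Vvec_def)
    also have "\<dots> = integral\<^sup>L (distr M (PiM {1..m} (\<lambda>_. borel)) (Vvec m V nu k l)) (\<lambda>v. h (v i))"
      by (rule integral_distr[symmetric, OF Vvm[OF that] hv])
    also have "\<dots> = integral\<^sup>L (distr M (PiM {1..m} (\<lambda>_. borel)) (Vvec m V nu k 1)) (\<lambda>v. h (v i))"
      using model_distr[OF mo that] by simp
    also have "\<dots> = (\<integral>\<omega>. h (Vvec m V nu k 1 \<omega> i) \<partial>M)"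
      using that by (intro integral_distr[OF Vvm hv]) auto
    also have "\<dots> = (\<integral>\<omega>. h (V nu k 1 i \<omega>) \<partial>M)"
      using i by (simp add: Vvec_def)
    finally show ?thesis .
  qed
  have "(\<integral>\<omega>. (\<Prod>kl\<in>S. (\<lambda>kl \<omega>. case kl of (k,l) \<Rightarrow> h (V nu k l i \<omega>)) kl \<omega>) \<partial>M)
        = (\<Prod>kl\<in>S. \<integral>\<omega>. (\<lambda>kl \<omega>. case kl of (k,l) \<Rightarrow> h (V nu k l i \<omega>)) kl \<omega> \<partial>M)"
    using S(1) ind by (rule indep_vars_lebesgue_integral) (use S_def intg in auto)
  also have "\<dots> = (\<Prod>(k,l)\<in>S. \<integral>\<omega>. h (V nu k 1 i \<omega>) \<partial>M)"
  proof (intro prod.cong refl)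
    fix kl assume "kl \<in> S"
    then obtain k l where kl: "kl = (k,l)" "k \<in> {1..m}" "l \<ge> 1" unfolding S_def by auto
    show "(\<integral>\<omega>. (\<lambda>kl \<omega>. case kl of (k,l) \<Rightarrow> h (V nu k l i \<omega>)) kl \<omega> \<partial>M) = (case kl of (k,l) \<Rightarrow> \<integral>\<omega>. h (V nu k 1 i \<omega>) \<partial>M)"
      using same[OF kl(2,3)] kl(1) by simp
  qed
  also have "\<dots> = (\<Prod>k\<in>{1..m}. \<Prod>l\<in>{1..\<kappa> k}. \<integral>\<omega>. h (V nu k 1 i \<omega>) \<partial>M)"
    unfolding S_def by (rule prod.Sigma[symmetric]) auto
  also have "\<dots> = (\<Prod>k\<in>{1..m}. (\<integral>\<omega>. h (V nu k 1 i \<omega>) \<partial>M) ^ \<kappa> k)"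
    by simp
  finally show ?thesis unfolding S_def by (simp add: case_prod_beta')
qed

definition noC :: "nat \<Rightarrow> 'a measure \<Rightarrow> (nat \<Rightarrow> nat \<Rightarrow> nat \<Rightarrow> nat \<Rightarrow> nat \<Rightarrow> 'a \<Rightarrow> bool)
   \<Rightarrow> nat \<Rightarrow> nat \<Rightarrow> (nat \<Rightarrow> nat) \<Rightarrow> nat \<Rightarrow> 'a set" where
  "noC m M C nu i \<kappa> j = {\<omega>\<in>space M. \<forall>k\<in>{1..m}. \<forall>l\<in>{1..\<kappa> k}. \<not> C nu k l i j \<omega>}"

lemma noC_single:
  assumes mo: "epidemic_model m N M V C nu" and i: "i \<in> {1..m}" and j: "j \<in> {1..N nu i}"
  shows "measure M (noC m M C nu i \<kappa> j) = (\<Prod>k\<in>{1..m}. (\<integral>\<omega>. 1 - V nu k 1 i \<omega> \<partial>M) ^ \<kappa> k)"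
proof -
  define S where "S = Sigma {1..m} (\<lambda>k. {1..\<kappa> k})"
  define F where "F = (\<lambda>(k,l). (k,l,i,j)) ` S"
  have finF: "finite F" unfolding F_def S_def by auto
  have Fsub: "F \<subseteq> {(k,l,i,j). k\<in>{1..m} \<and> l \<ge> 1 \<and> i\<in>{1..m} \<and> j\<in>{1..N nu i}}"
    unfolding F_def S_def using i j by auto
  have inj: "inj_on (\<lambda>(k,l). (k,l,i,j)) S" by (auto simp: inj_on_def)
  have "measure M (noC m M C nu i \<kappa> j) = measure M {\<omega>\<in>space M. (\<forall>(k,l,i,j)\<in>F. C nu k l i j \<omega> = (\<lambda>_. False) (k,l,i,j))}"
    unfolding noC_def F_def S_def by (intro arg_cong[where f="measure M"]) auto
  also have "\<dots> = (\<integral>\<omega>. (\<Prod>(k,l,i,j)\<in>F. if (\<lambda>_. False) (k,l,i,j) then V nu k l i \<omega> else 1 - V nu k l i \<omega>) \<partial>M)"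
    by (rule model_cond[OF mo finF Fsub])
  also have "\<dots> = (\<integral>\<omega>. (\<Prod>(k,l)\<in>S. 1 - V nu k l i \<omega>) \<partial>M)"
    unfolding F_def by (subst prod.reindex[OF inj]) (simp add: case_prod_beta' comp_def)
  also have "\<dots> = (\<Prod>k\<in>{1..m}. (\<integral>\<omega>. 1 - V nu k 1 i \<omega> \<partial>M) ^ \<kappa> k)"
    unfolding S_def by (rule prod_V_integral[OF mo i, where h="\<lambda>x. 1 - x"]) auto
  finally show ?thesis .
qed

lemma noC_pair:
  assumes mo: "epidemic_model m N M V C nu" and i: "i \<in> {1..m}" and j: "j \<in> {1..N nu i}"
    and j': "j' \<in> {1..N nu i}" and jj: "j \<noteq> j'"
  shows "measure M (noC m M C nu i \<kappa> j \<inter> noC m M C nu i \<kappa> j') = (\<Prod>k\<in>{1..m}. (\<integral>\<omega>. (1 - V nu k 1 i \<omega>)\<^sup>2 \<partial>M) ^ \<kappa> k)"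
proof -
  define S where "S = Sigma {1..m} (\<lambda>k. {1..\<kappa> k})"
  define F1 where "F1 = (\<lambda>(k,l). (k,l,i,j)) ` S"
  define F2 where "F2 = (\<lambda>(k,l). (k,l,i,j')) ` S"
  have finF: "finite (F1 \<union> F2)" unfolding F1_def F2_def S_def by auto
  have Fsub: "F1 \<union> F2 \<subseteq> {(k,l,i,j). k\<in>{1..m} \<and> l \<ge> 1 \<and> i\<in>{1..m} \<and> j\<in>{1..N nu i}}"
    unfolding F1_def F2_def S_def using i j j' by auto
  have inj1: "inj_on (\<lambda>(k,l). (k,l,i,j)) S" by (auto simp: inj_on_def)
  have inj2: "inj_on (\<lambda>(k,l). (k,l,i,j')) S" by (auto simp: inj_on_def)
  have disj: "F1 \<inter> F2 = {}" unfolding F1_def F2_def using jj by auto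
  have "measure M (noC m M C nu i \<kappa> j \<inter> noC m M C nu i \<kappa> j') = measure M {\<omega>\<in>space M. (\<forall>(k,l,i,j)\<in>F1 \<union> F2. C nu k l i j \<omega> = (\<lambda>_. False) (k,l,i,j))}"
    unfolding noC_def F1_def F2_def S_def by (intro arg_cong[where f="measure M"]) force
  also have "\<dots> = (\<integral>\<omega>. (\<Prod>(k,l,i,j)\<in>F1 \<union> F2. if (\<lambda>_. False) (k,l,i,j) then V nu k l i \<omega> else 1 - V nu k l i \<omega>) \<partial>M)"
    by (rule model_cond[OF mo finF Fsub])
  also have "\<dots> = (\<integral>\<omega>. (\<Prod>(k,l)\<in>S. (1 - V nu k l i \<omega>)\<^sup>2) \<partial>M)"
  proof (intro Bochner_Integration.integral_cong refl)
    fix \<omega>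
    have "(\<Prod>(k,l,i,j)\<in>F1 \<union> F2. if (\<lambda>_. False) (k,l,i,j) then V nu k l i \<omega> else 1 - V nu k l i \<omega>)
        = (\<Prod>(k,l,i,j)\<in>F1. 1 - V nu k l i \<omega>) * (\<Prod>(k,l,i,j)\<in>F2. 1 - V nu k l i \<omega>)"
      using finF disj by (simp add: prod.union_disjoint)
    also have "\<dots> = (\<Prod>(k,l)\<in>S. 1 - V nu k l i \<omega>) * (\<Prod>(k,l)\<in>S. 1 - V nu k l i \<omega>)"
      unfolding F1_def F2_def by (subst prod.reindex[OF inj1], subst prod.reindex[OF inj2]) (simp add: case_prod_beta' comp_def)
    also have "\<dots> = (\<Prod>(k,l)\<in>S. (1 - V nu k l i \<omega>)\<^sup>2)"
      by (simp add: prod.distrib[symmetric] power2_eq_square case_prod_beta')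
    finally show "(\<Prod>(k,l,i,j)\<in>F1 \<union> F2. if (\<lambda>_. False) (k,l,i,j) then V nu k l i \<omega> else 1 - V nu k l i \<omega>) = (\<Prod>(k,l)\<in>S. (1 - V nu k l i \<omega>)\<^sup>2)" .
  qed
  also have "\<dots> = (\<Prod>k\<in>{1..m}. (\<integral>\<omega>. (1 - V nu k 1 i \<omega>)\<^sup>2 \<partial>M) ^ \<kappa> k)"
    unfolding S_def by (rule prod_V_integral[OF mo i, where h="\<lambda>x. (1 - x)\<^sup>2"]) (auto simp: abs_le_iff power_le_one)
  finally show ?thesis .
qed

definition Xn :: "nat \<Rightarrow> (nat \<Rightarrow> nat \<Rightarrow> nat) \<Rightarrow> (nat \<Rightarrow> nat \<Rightarrow> nat \<Rightarrow> nat \<Rightarrow> nat \<Rightarrow> 'a \<Rightarrow> bool)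
   \<Rightarrow> nat \<Rightarrow> nat \<Rightarrow> (nat \<Rightarrow> nat) \<Rightarrow> 'a \<Rightarrow> nat" where
  "Xn m N C nu i \<kappa> \<omega> = card {j\<in>{1..N nu i}. \<exists>k\<in>{1..m}. \<exists>l\<in>{1..\<kappa> k}. C nu k l i j \<omega>}"

lemma Xcount_Xn: "Xcount m N \<pi> C nu i t \<omega> = real (Xn m N C nu i (\<lambda>k. nat \<lfloor>t k * Ntil m N \<pi> nu k\<rfloor>) \<omega>)"
  unfolding Xcount_def Xn_def chi_def by simp

lemma Xn_le: "Xn m N C nu i \<kappa> \<omega> \<le> N nu i"
proof -
  have "Xn m N C nu i \<kappa> \<omega> \<le> card {1..N nu i}"
    unfolding Xn_def by (rule card_mono) auto
  then show ?thesis by simp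
qed

lemma contact_set_meas:
  assumes mo: "epidemic_model m N M V C nu" and i: "i \<in> {1..m}" and j: "j \<in> {1..N nu i}"
  shows "{\<omega>\<in>space M. \<exists>k\<in>{1..m}. \<exists>l\<in>{1..\<kappa> k}. C nu k l i j \<omega>} \<in> sets M"
proof -
  have "{\<omega>\<in>space M. \<exists>k\<in>{1..m}. \<exists>l\<in>{1..\<kappa> k}. C nu k l i j \<omega>}
     = (\<Union>k\<in>{1..m}. \<Union>l\<in>{1..\<kappa> k}. {\<omega>\<in>space M. C nu k l i j \<omega>})" by auto
  also have "\<dots> \<in> sets M"
    using model_Cmeas[OF mo _ _ i j] by (intro sets.finite_UN) auto
  finally show ?thesis .
qed

lemma noC_meas:
  assumes mo: "epidemic_model m N M V C nu" and i: "i \<in> {1..m}" and j: "j \<in> {1..N nu i}"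
  shows "noC m M C nu i \<kappa> j \<in> sets M"
proof -
  have "noC m M C nu i \<kappa> j = space M - {\<omega>\<in>space M. \<exists>k\<in>{1..m}. \<exists>l\<in>{1..\<kappa> k}. C nu k l i j \<omega>}"
    unfolding noC_def by auto
  then show ?thesis using contact_set_meas[OF mo i j] by auto
qed

lemma Xn_meas:
  assumes mo: "epidemic_model m N M V C nu" and i: "i \<in> {1..m}"
  shows "(\<lambda>\<omega>. real (Xn m N C nu i \<kappa> \<omega>)) \<in> borel_measurable M"
proof -
  have "(\<lambda>\<omega>. \<Sum>j\<in>{1..N nu i}. indicator {\<omega>\<in>space M. \<exists>k\<in>{1..m}. \<exists>l\<in>{1..\<kappa> k}. C nu k l i j \<omega>} \<omega> :: real) \<in> borel_measurable M"
    using contact_set_meas[OF mo i] by (intro borel_measurable_sum borel_measurable_indicator) auto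
  then show ?thesis
  proof (rule measurable_cong[THEN iffD1, rotated])
    fix \<omega> assume w: "\<omega> \<in> space M"
    have "(\<Sum>j\<in>{1..N nu i}. indicator {\<omega>\<in>space M. \<exists>k\<in>{1..m}. \<exists>l\<in>{1..\<kappa> k}. C nu k l i j \<omega>} \<omega> :: real)
        = (\<Sum>j\<in>{1..N nu i}. if (\<exists>k\<in>{1..m}. \<exists>l\<in>{1..\<kappa> k}. C nu k l i j \<omega>) then 1 else 0)"
      using w by (intro sum.cong) (auto simp: indicator_def)
    also have "\<dots> = real (Xn m N C nu i \<kappa> \<omega>)"
      unfolding Xn_def by (subst sum.inter_filter[symmetric]) auto
    finally show "(\<Sum>j\<in>{1..N nu i}. indicator {\<omega>\<in>space M. \<exists>k\<in>{1..m}. \<exists>l\<in>{1..\<kappa> k}. C nu k l i j \<omega>} \<omega> :: real) = real (Xn m N C nu i \<kappa> \<omega>)" .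
  qed
qed

lemma per_nu_bound:
  fixes \<kappa> :: "nat \<Rightarrow> nat"
  assumes mo: "epidemic_model m N M V C nu" and i: "i \<in> {1..m}" and Np: "N nu i \<ge> 1" and d: "\<delta> > 0"
  defines "q \<equiv> (\<Prod>k\<in>{1..m}. (\<integral>\<omega>. 1 - V nu k 1 i \<omega> \<partial>M) ^ \<kappa> k)"
    and "q2 \<equiv> (\<Prod>k\<in>{1..m}. (\<integral>\<omega>. (1 - V nu k 1 i \<omega>)\<^sup>2 \<partial>M) ^ \<kappa> k)"
  shows "measure M {\<omega>\<in>space M. \<delta> < \<bar>real (Xn m N C nu i \<kappa> \<omega>) / N nu i - (1 - q)\<bar>}
          \<le> (1 / N nu i + (q2 - q\<^sup>2)) / \<delta>\<^sup>2"
proof -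
  interpret prob_space M using mo by (rule model_prob)
  have q2: "0 \<le> q2" unfolding q2_def by (intro prod_nonneg zero_le_power integral_nonneg_AE) auto
  have "measure M {\<omega>\<in>space M. \<delta> < \<bar>real (card {j\<in>{1..N nu i}. \<omega> \<in> noC m M C nu i \<kappa> j}) / N nu i - q\<bar>}
          \<le> (1 / N nu i + (q2 - q\<^sup>2)) / \<delta>\<^sup>2"
  proof (rule second_moment[OF prob_space_axioms _ _ _ _ _ _ d q2])
    show "finite {1..N nu i}" by simp
    show "card {1..N nu i} = N nu i" by simp
    show "0 < N nu i" using Np by simp
    show "noC m M C nu i \<kappa> j \<in> sets M" if "j \<in> {1..N nu i}" for j
      using noC_meas[OF mo i that] .
    show "measure M (noC m M C nu i \<kappa> j) = q" if "j \<in> {1..N nu i}" for j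
      unfolding q_def using noC_single[OF mo i that] .
    show "measure M (noC m M C nu i \<kappa> j \<inter> noC m M C nu i \<kappa> j') = q2"
      if "j \<in> {1..N nu i}" "j' \<in> {1..N nu i}" "j \<noteq> j'" for j j'
      unfolding q2_def using noC_pair[OF mo i that] .
  qed
  also have "{\<omega>\<in>space M. \<delta> < \<bar>real (card {j\<in>{1..N nu i}. \<omega> \<in> noC m M C nu i \<kappa> j}) / N nu i - q\<bar>}
     = {\<omega>\<in>space M. \<delta> < \<bar>real (Xn m N C nu i \<kappa> \<omega>) / N nu i - (1 - q)\<bar>}"
  proof (intro Collect_cong conj_cong refl)
    fix \<omega> assume w: "\<omega> \<in> space M"
    have eq: "{j\<in>{1..N nu i}. \<omega> \<in> noC m M C nu i \<kappa> j} = {1..N nu i} - {j\<in>{1..N nu i}. \<exists>k\<in>{1..m}. \<exists>l\<in>{1..\<kappa> k}. C nu k l i j \<omega>}"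
      using w unfolding noC_def by auto
    have c: "real (card {j\<in>{1..N nu i}. \<omega> \<in> noC m M C nu i \<kappa> j}) = real (N nu i) - real (Xn m N C nu i \<kappa> \<omega>)"
    proof -
      have le: "card {j\<in>{1..N nu i}. \<exists>k\<in>{1..m}. \<exists>l\<in>{1..\<kappa> k}. C nu k l i j \<omega>} \<le> N nu i"
        using Xn_le[of m N C nu i \<kappa> \<omega>] unfolding Xn_def .
      show ?thesis unfolding eq Xn_def
        by (subst card_Diff_subset) (use le in \<open>auto simp: of_nat_diff\<close>)
    qed
    have "real (card {j\<in>{1..N nu i}. \<omega> \<in> noC m M C nu i \<kappa> j}) / N nu i - q
        = - (real (Xn m N C nu i \<kappa> \<omega>) / N nu i - (1 - q))"
      unfolding c using Np by (simp add: field_simps)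
    then show "(\<delta> < \<bar>real (card {j\<in>{1..N nu i}. \<omega> \<in> noC m M C nu i \<kappa> j}) / N nu i - q\<bar>)
        = (\<delta> < \<bar>real (Xn m N C nu i \<kappa> \<omega>) / N nu i - (1 - q)\<bar>)" by (simp only: abs_minus_cancel)
  qed
  finally show ?thesis .
qed

lemma floor_ratio:
  fixes Nt :: "nat \<Rightarrow> real"
  assumes y: "y \<ge> 0" and Nt: "filterlim Nt at_top sequentially"
  shows "(\<lambda>nu. real (nat \<lfloor>y * Nt nu\<rfloor>) / Nt nu) \<longlonglongrightarrow> y"
proof (rule tendsto_sandwich)
  have ev: "eventually (\<lambda>nu. Nt nu > 0) sequentially"
    using Nt by (simp add: filterlim_at_top_dense)
  show "eventually (\<lambda>nu. y - 1 / Nt nu \<le> real (nat \<lfloor>y * Nt nu\<rfloor>) / Nt nu) sequentially"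
    using ev
  proof (rule eventually_mono)
    fix nu assume p: "Nt nu > 0"
    have "y * Nt nu - 1 \<le> real (nat \<lfloor>y * Nt nu\<rfloor>)"
      using y p by linarith
    then have "(y * Nt nu - 1) / Nt nu \<le> real (nat \<lfloor>y * Nt nu\<rfloor>) / Nt nu"
      using p by (intro divide_right_mono) auto
    moreover have "(y * Nt nu - 1) / Nt nu = y - 1 / Nt nu" using p by (simp add: field_simps)
    ultimately show "y - 1 / Nt nu \<le> real (nat \<lfloor>y * Nt nu\<rfloor>) / Nt nu" by simp
  qed
  show "eventually (\<lambda>nu. real (nat \<lfloor>y * Nt nu\<rfloor>) / Nt nu \<le> y) sequentially"
    using ev
  proof (rule eventually_mono)
    fix nu assume p: "Nt nu > 0"
    have "real (nat \<lfloor>y * Nt nu\<rfloor>) \<le> y * Nt nu"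
      using y p by (simp add: mult_nonneg_nonneg)
    then show "real (nat \<lfloor>y * Nt nu\<rfloor>) / Nt nu \<le> y"
      using p by (simp add: field_simps)
  qed
  have "(\<lambda>nu. inverse (Nt nu)) \<longlonglongrightarrow> 0" by (rule tendsto_inverse_0_at_top[OF Nt])
  then have "(\<lambda>nu. y - 1 / Nt nu) \<longlonglongrightarrow> y - 0" by (intro tendsto_intros) (simp add: inverse_eq_divide)
  then show "(\<lambda>nu. y - 1 / Nt nu) \<longlonglongrightarrow> y" by simp
qed (rule tendsto_const)

lemma sq_integral_identity:
  fixes X :: "'a \<Rightarrow> real" and M :: "'a measure"
  assumes P: "prob_space M" and Vm: "X \<in> borel_measurable M"
    and b: "\<And>\<omega>. \<omega> \<in> space M \<Longrightarrow> 0 \<le> X \<omega> \<and> X \<omega> \<le> 1"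
  shows "(\<integral>\<omega>. (1 - X \<omega>)\<^sup>2 \<partial>M) = (1 - prob_space.expectation M X)\<^sup>2 + prob_space.variance M X"
    and "(\<integral>\<omega>. 1 - X \<omega> \<partial>M) = 1 - prob_space.expectation M X"
    and "0 \<le> prob_space.expectation M X" "prob_space.expectation M X \<le> 1"
    and "0 \<le> (\<integral>\<omega>. (1 - X \<omega>)\<^sup>2 \<partial>M)" "(\<integral>\<omega>. (1 - X \<omega>)\<^sup>2 \<partial>M) \<le> 1"
proof -
  interpret prob_space M by (rule P)
  have iX: "integrable M X"
    by (rule integrable_const_bound[where B=1]) (use b Vm in \<open>auto intro!: AE_I2\<close>)
  have iX2: "integrable M (\<lambda>\<omega>. (X \<omega>)\<^sup>2)"
    by (rule integrable_const_bound[where B=1]) (use b Vm in \<open>auto intro!: AE_I2 simp: abs_le_iff power_le_one\<close>)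
  define e where "e = expectation X"
  have "(\<integral>\<omega>. (1 - X \<omega>)\<^sup>2 \<partial>M) = (\<integral>\<omega>. (1 - 2 * X \<omega>) + (X \<omega>)\<^sup>2 \<partial>M)"
    by (intro Bochner_Integration.integral_cong) (auto simp: power2_eq_square algebra_simps)
  also have "\<dots> = 1 - 2 * e + (\<integral>\<omega>. (X \<omega>)\<^sup>2 \<partial>M)"
    using iX iX2 by (simp add: Bochner_Integration.integral_add Bochner_Integration.integral_diff prob_space e_def)
  finally have A: "(\<integral>\<omega>. (1 - X \<omega>)\<^sup>2 \<partial>M) = 1 - 2 * e + (\<integral>\<omega>. (X \<omega>)\<^sup>2 \<partial>M)" .
  have "variance X = (\<integral>\<omega>. ((X \<omega>)\<^sup>2 - (2 * e) * X \<omega>) + e\<^sup>2 \<partial>M)"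
    by (intro Bochner_Integration.integral_cong) (auto simp: power2_eq_square algebra_simps e_def)
  also have "\<dots> = (\<integral>\<omega>. (X \<omega>)\<^sup>2 - (2 * e) * X \<omega> \<partial>M) + e\<^sup>2"
    by (subst Bochner_Integration.integral_add) (use iX iX2 in \<open>auto simp: prob_space\<close>)
  also have "\<dots> = (\<integral>\<omega>. (X \<omega>)\<^sup>2 \<partial>M) - 2 * e * e + e\<^sup>2"
    by (subst Bochner_Integration.integral_diff) (use iX iX2 in \<open>auto simp: e_def\<close>)
  finally have B0: "variance X = (\<integral>\<omega>. (X \<omega>)\<^sup>2 \<partial>M) - 2 * e * e + e\<^sup>2" .
  have B: "variance X = (\<integral>\<omega>. (X \<omega>)\<^sup>2 \<partial>M) - e\<^sup>2"
    using B0 unfolding power2_eq_square by linarith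
  show "(\<integral>\<omega>. (1 - X \<omega>)\<^sup>2 \<partial>M) = (1 - expectation X)\<^sup>2 + variance X"
    unfolding A B by (simp add: e_def power2_eq_square algebra_simps)
  show "(\<integral>\<omega>. 1 - X \<omega> \<partial>M) = 1 - expectation X"
    using iX by (simp add: Bochner_Integration.integral_diff prob_space)
  show "0 \<le> expectation X" using b by (intro integral_nonneg_AE) (auto intro!: AE_I2)
  have "expectation X \<le> expectation (\<lambda>_. 1)"
    using b iX by (intro integral_mono_AE) (auto intro!: AE_I2)
  then show "expectation X \<le> 1" by (simp add: prob_space)
  show "0 \<le> (\<integral>\<omega>. (1 - X \<omega>)\<^sup>2 \<partial>M)" by (intro integral_nonneg_AE) auto
  have i1: "integrable M (\<lambda>\<omega>. (1 - X \<omega>)\<^sup>2)"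
    by (rule integrable_const_bound[where B=1]) (use b Vm in \<open>auto intro!: AE_I2 simp: abs_le_iff power_le_one\<close>)
  have "(\<integral>\<omega>. (1 - X \<omega>)\<^sup>2 \<partial>M) \<le> expectation (\<lambda>_. 1)"
    using b i1 by (intro integral_mono_AE) (auto intro!: AE_I2 simp: abs_le_iff power_le_one)
  then show "(\<integral>\<omega>. (1 - X \<omega>)\<^sup>2 \<partial>M) \<le> 1" by (simp add: prob_space)
qed

lemma q_limits:
  fixes a b c :: "nat \<Rightarrow> nat \<Rightarrow> real" and n :: "nat \<Rightarrow> nat \<Rightarrow> nat" and K :: "nat set"
  assumes K: "finite K"
    and a01: "\<And>k nu. k \<in> K \<Longrightarrow> 0 \<le> a k nu \<and> a k nu \<le> 1"
    and b01: "\<And>k nu. k \<in> K \<Longrightarrow> 0 \<le> b k nu \<and> b k nu \<le> 1"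
    and a0: "\<And>k. k \<in> K \<Longrightarrow> a k \<longlonglongrightarrow> 0"
    and b0: "\<And>k. k \<in> K \<Longrightarrow> b k \<longlonglongrightarrow> 0"
    and na: "\<And>k. k \<in> K \<Longrightarrow> (\<lambda>nu. real (n k nu) * a k nu) \<longlonglongrightarrow> cc k"
    and nb: "\<And>k. k \<in> K \<Longrightarrow> (\<lambda>nu. real (n k nu) * b k nu) \<longlonglongrightarrow> 2 * cc k"
  shows "(\<lambda>nu. \<Prod>k\<in>K. (1 - a k nu) ^ n k nu) \<longlonglongrightarrow> exp (- (\<Sum>k\<in>K. cc k))"
    and "(\<lambda>nu. (\<Prod>k\<in>K. (1 - b k nu) ^ n k nu) - (\<Prod>k\<in>K. (1 - a k nu) ^ n k nu)\<^sup>2) \<longlonglongrightarrow> 0"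
proof -
  have A: "(\<lambda>nu. \<Prod>k\<in>K. (1 - a k nu) ^ n k nu) \<longlonglongrightarrow> (\<Prod>k\<in>K. exp (- cc k))"
    using a01 a0 na by (intro tendsto_prod pow_lim) auto
  then show "(\<lambda>nu. \<Prod>k\<in>K. (1 - a k nu) ^ n k nu) \<longlonglongrightarrow> exp (- (\<Sum>k\<in>K. cc k))"
    using K by (simp add: exp_sum[symmetric] sum_negf)
  have B: "(\<lambda>nu. \<Prod>k\<in>K. (1 - b k nu) ^ n k nu) \<longlonglongrightarrow> (\<Prod>k\<in>K. exp (- (2 * cc k)))"
    using b01 b0 nb by (intro tendsto_prod pow_lim) auto
  have "(\<lambda>nu. (\<Prod>k\<in>K. (1 - b k nu) ^ n k nu) - (\<Prod>k\<in>K. (1 - a k nu) ^ n k nu)\<^sup>2)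
       \<longlonglongrightarrow> (\<Prod>k\<in>K. exp (- (2 * cc k))) - (\<Prod>k\<in>K. exp (- cc k))\<^sup>2"
    by (rule tendsto_diff[OF B tendsto_power[OF A]])
  moreover have "(\<Prod>k\<in>K. exp (- (2 * cc k))) = (\<Prod>k\<in>K. exp (- cc k))\<^sup>2"
    unfolding power2_eq_square prod.distrib[symmetric]
    by (intro prod.cong refl) (simp add: exp_add[symmetric])
  ultimately show "(\<lambda>nu. (\<Prod>k\<in>K. (1 - b k nu) ^ n k nu) - (\<Prod>k\<in>K. (1 - a k nu) ^ n k nu)\<^sup>2) \<longlonglongrightarrow> 0"
    by simp
qed

locale epi =
  fixes m :: nat and N :: "nat \<Rightarrow> nat \<Rightarrow> nat" and \<pi> :: "nat \<Rightarrow> real"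
    and M :: "nat \<Rightarrow> 'a measure"
    and V :: "nat \<Rightarrow> nat \<Rightarrow> nat \<Rightarrow> nat \<Rightarrow> 'a \<Rightarrow> real"
    and C :: "nat \<Rightarrow> nat \<Rightarrow> nat \<Rightarrow> nat \<Rightarrow> nat \<Rightarrow> 'a \<Rightarrow> bool"
    and \<mu> :: "nat \<Rightarrow> nat \<Rightarrow> real"
  assumes m: "m \<ge> 1"
    and N_pos: "\<And>nu i. i \<in> {1..m} \<Longrightarrow> N nu i \<ge> 1"
    and pi_pos: "\<And>i. i \<in> {1..m} \<Longrightarrow> \<pi> i > 0"
    and model: "\<And>nu. epidemic_model m N (M nu) V C nu"
    and N_inf: "filterlim (\<lambda>nu. Ntot m N nu) at_top sequentially"
    and pi_lim: "\<And>i. i \<in> {1..m} \<Longrightarrow> (\<lambda>nu. real (N nu i) / real (Ntot m N nu)) \<longlonglongrightarrow> \<pi> i"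
    and mu_nonneg: "\<And>i k. i \<in> {1..m} \<Longrightarrow> k \<in> {1..m} \<Longrightarrow> \<mu> i k \<ge> 0"
    and mu_lim: "\<And>i k. i \<in> {1..m} \<Longrightarrow> k \<in> {1..m} \<Longrightarrow>
       (\<lambda>nu. real (Ntot m N nu) * prob_space.expectation (M nu) (V nu i 1 k)) \<longlonglongrightarrow> \<mu> i k"
    and var_lim: "\<And>i k. i \<in> {1..m} \<Longrightarrow> k \<in> {1..m} \<Longrightarrow>
       (\<lambda>nu. real (Ntot m N nu) * prob_space.variance (M nu) (V nu i 1 k)) \<longlonglongrightarrow> 0"
begin

lemma Nt_inf: "filterlim (\<lambda>nu. real (Ntot m N nu)) at_top sequentially"
  by (rule filterlim_compose[OF filterlim_real_sequentially N_inf])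

lemma Nt_pos: "0 < real (Ntot m N nu)"
proof -
  have "N nu 1 \<le> Ntot m N nu" unfolding Ntot_def using m by (intro member_le_sum) auto
  then show ?thesis using N_pos[of 1 nu] m by simp
qed

lemma Ntot_ne0[simp]: "Ntot m N nu \<noteq> 0"
  using Nt_pos[of nu] by auto

lemma inv_Nt: "(\<lambda>nu. 1 / real (Ntot m N nu)) \<longlonglongrightarrow> 0"
  using tendsto_inverse_0_at_top[OF Nt_inf] by (simp add: inverse_eq_divide)

lemma small_lim:
  assumes "(\<lambda>nu. real (Ntot m N nu) * f nu) \<longlonglongrightarrow> L"
  shows "f \<longlonglongrightarrow> 0"
proof -
  have "(\<lambda>nu. (real (Ntot m N nu) * f nu) * (1 / real (Ntot m N nu))) \<longlonglongrightarrow> L * 0"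
    by (intro tendsto_mult assms inv_Nt)
  moreover have "(\<lambda>nu. (real (Ntot m N nu) * f nu) * (1 / real (Ntot m N nu))) = f"
    using Nt_pos by (auto simp: fun_eq_iff)
  ultimately show ?thesis by simp
qed

lemma Ni_inv: assumes i: "i \<in> {1..m}" shows "(\<lambda>nu. 1 / real (N nu i)) \<longlonglongrightarrow> 0"
proof -
  have "(\<lambda>nu. (1 / real (Ntot m N nu)) / (real (N nu i) / real (Ntot m N nu))) \<longlonglongrightarrow> 0 / \<pi> i"
    using pi_pos[OF i] by (intro tendsto_divide inv_Nt pi_lim i) auto
  moreover have "(\<lambda>nu. (1 / real (Ntot m N nu)) / (real (N nu i) / real (Ntot m N nu))) = (\<lambda>nu. 1 / real (N nu i))"
    using Nt_pos by (auto simp: fun_eq_iff)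
  ultimately show ?thesis by simp
qed

lemma Ni_ratio: assumes i: "i \<in> {1..m}" shows "(\<lambda>nu. real (N nu i) / Ntil m N \<pi> nu i) \<longlonglongrightarrow> 1"
proof -
  have "(\<lambda>nu. (real (N nu i) / real (Ntot m N nu)) / \<pi> i) \<longlonglongrightarrow> \<pi> i / \<pi> i"
    using pi_pos[OF i] by (intro tendsto_divide pi_lim i tendsto_const) auto
  moreover have "(\<lambda>nu. (real (N nu i) / real (Ntot m N nu)) / \<pi> i) = (\<lambda>nu. real (N nu i) / Ntil m N \<pi> nu i)"
    by (auto simp: fun_eq_iff Ntil_def)
  ultimately show ?thesis using pi_pos[OF i] by simp
qed

lemma EV_facts:
  assumes k: "k \<in> {1..m}" and i: "i \<in> {1..m}"
  shows "(\<integral>\<omega>. (1 - V nu k 1 i \<omega>)\<^sup>2 \<partial>M nu) = (1 - prob_space.expectation (M nu) (V nu k 1 i))\<^sup>2 + prob_space.variance (M nu) (V nu k 1 i)"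
    and "(\<integral>\<omega>. 1 - V nu k 1 i \<omega> \<partial>M nu) = 1 - prob_space.expectation (M nu) (V nu k 1 i)"
    and "0 \<le> prob_space.expectation (M nu) (V nu k 1 i)" "prob_space.expectation (M nu) (V nu k 1 i) \<le> 1"
    and "0 \<le> (\<integral>\<omega>. (1 - V nu k 1 i \<omega>)\<^sup>2 \<partial>M nu)" "(\<integral>\<omega>. (1 - V nu k 1 i \<omega>)\<^sup>2 \<partial>M nu) \<le> 1"
  using sq_integral_identity[OF model_prob[OF model] model_Vmeas[OF model k _ i] model_V01[OF model k _ i]]
  by auto

definition kap :: "(nat \<Rightarrow> real) \<Rightarrow> nat \<Rightarrow> nat \<Rightarrow> nat" where
  "kap t nu k = nat \<lfloor>t k * Ntil m N \<pi> nu k\<rfloor>"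

lemma kap_ratio:
  assumes k: "k \<in> {1..m}" and t: "t k \<ge> 0"
  shows "(\<lambda>nu. real (kap t nu k) / real (Ntot m N nu)) \<longlonglongrightarrow> t k * \<pi> k"
proof -
  have "(\<lambda>nu. real (nat \<lfloor>(t k * \<pi> k) * real (Ntot m N nu)\<rfloor>) / real (Ntot m N nu)) \<longlonglongrightarrow> t k * \<pi> k"
    using t pi_pos[OF k] by (intro floor_ratio Nt_inf) auto
  moreover have "(\<lambda>nu. real (nat \<lfloor>(t k * \<pi> k) * real (Ntot m N nu)\<rfloor>) / real (Ntot m N nu))
      = (\<lambda>nu. real (kap t nu k) / real (Ntot m N nu))"
    by (auto simp: fun_eq_iff kap_def Ntil_def ac_simps)
  ultimately show ?thesis by simp
qed

lemma q_lims:
  assumes i: "i \<in> {1..m}" and t: "\<And>k. k \<in> {1..m} \<Longrightarrow> t k \<ge> 0"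
  shows "(\<lambda>nu. \<Prod>k\<in>{1..m}. (\<integral>\<omega>. 1 - V nu k 1 i \<omega> \<partial>M nu) ^ kap t nu k)
           \<longlonglongrightarrow> exp (- (\<Sum>k\<in>{1..m}. t k * \<pi> k * \<mu> k i))"
    and "(\<lambda>nu. (\<Prod>k\<in>{1..m}. (\<integral>\<omega>. (1 - V nu k 1 i \<omega>)\<^sup>2 \<partial>M nu) ^ kap t nu k)
              - (\<Prod>k\<in>{1..m}. (\<integral>\<omega>. 1 - V nu k 1 i \<omega> \<partial>M nu) ^ kap t nu k)\<^sup>2) \<longlonglongrightarrow> 0"
proof -
  define a where "a k nu = prob_space.expectation (M nu) (V nu k 1 i)" for k nu
  define vr where "vr k nu = prob_space.variance (M nu) (V nu k 1 i)" for k nu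
  define b where "b k nu = 1 - (\<integral>\<omega>. (1 - V nu k 1 i \<omega>)\<^sup>2 \<partial>M nu)" for k nu
  have b_eq: "b k nu = 2 * a k nu - a k nu * a k nu - vr k nu" if "k \<in> {1..m}" for k nu
    unfolding b_def a_def vr_def EV_facts(1)[OF that i] by (simp add: power2_eq_square algebra_simps)
  have a0: "a k \<longlonglongrightarrow> 0" if "k \<in> {1..m}" for k
    unfolding a_def by (rule small_lim[OF mu_lim[OF that i]])
  have v0: "vr k \<longlonglongrightarrow> 0" if "k \<in> {1..m}" for k
    unfolding vr_def by (rule small_lim[OF var_lim[OF that i]])
  have na: "(\<lambda>nu. real (kap t nu k) * a k nu) \<longlonglongrightarrow> t k * \<pi> k * \<mu> k i" if k: "k \<in> {1..m}" for k
  proof -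
    have "(\<lambda>nu. (real (kap t nu k) / real (Ntot m N nu)) * (real (Ntot m N nu) * a k nu)) \<longlonglongrightarrow> (t k * \<pi> k) * \<mu> k i"
      unfolding a_def by (intro tendsto_mult kap_ratio mu_lim k i t)
    moreover have "(\<lambda>nu. (real (kap t nu k) / real (Ntot m N nu)) * (real (Ntot m N nu) * a k nu)) = (\<lambda>nu. real (kap t nu k) * a k nu)"
      using Nt_pos by (auto simp: fun_eq_iff)
    ultimately show ?thesis by simp
  qed
  have nv: "(\<lambda>nu. real (kap t nu k) * vr k nu) \<longlonglongrightarrow> 0" if k: "k \<in> {1..m}" for k
  proof -
    have "(\<lambda>nu. (real (kap t nu k) / real (Ntot m N nu)) * (real (Ntot m N nu) * vr k nu)) \<longlonglongrightarrow> (t k * \<pi> k) * 0"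
      unfolding vr_def by (intro tendsto_mult kap_ratio var_lim k i t)
    moreover have "(\<lambda>nu. (real (kap t nu k) / real (Ntot m N nu)) * (real (Ntot m N nu) * vr k nu)) = (\<lambda>nu. real (kap t nu k) * vr k nu)"
      using Nt_pos by (auto simp: fun_eq_iff)
    ultimately show ?thesis by simp
  qed
  have nb: "(\<lambda>nu. real (kap t nu k) * b k nu) \<longlonglongrightarrow> 2 * (t k * \<pi> k * \<mu> k i)" if k: "k \<in> {1..m}" for k
  proof -
    have "(\<lambda>nu. 2 * (real (kap t nu k) * a k nu) - (real (kap t nu k) * a k nu) * a k nu - real (kap t nu k) * vr k nu)
        \<longlonglongrightarrow> 2 * (t k * \<pi> k * \<mu> k i) - (t k * \<pi> k * \<mu> k i) * 0 - 0"
      by (intro tendsto_intros na nv a0 k)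
    moreover have "(\<lambda>nu. 2 * (real (kap t nu k) * a k nu) - (real (kap t nu k) * a k nu) * a k nu - real (kap t nu k) * vr k nu)
       = (\<lambda>nu. real (kap t nu k) * b k nu)"
    proof
      fix nu show "2 * (real (kap t nu k) * a k nu) - (real (kap t nu k) * a k nu) * a k nu - real (kap t nu k) * vr k nu
        = real (kap t nu k) * b k nu" unfolding b_eq[OF k] by (simp add: algebra_simps)
    qed
    ultimately show ?thesis by simp
  qed
  have b0: "b k \<longlonglongrightarrow> 0" if k: "k \<in> {1..m}" for k
  proof -
    have "(\<lambda>nu. 2 * a k nu - a k nu * a k nu - vr k nu) \<longlonglongrightarrow> 2 * 0 - 0 * 0 - 0"
      by (intro tendsto_intros a0 v0 k)
    moreover have "(\<lambda>nu. 2 * a k nu - a k nu * a k nu - vr k nu) = b k"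
      using b_eq[OF k] by (auto simp: fun_eq_iff)
    ultimately show ?thesis by simp
  qed
  have a01: "0 \<le> a k nu \<and> a k nu \<le> 1" if "k \<in> {1..m}" for k nu
    unfolding a_def using EV_facts(3,4)[OF that i] by auto
  have b01: "0 \<le> b k nu \<and> b k nu \<le> 1" if "k \<in> {1..m}" for k nu
    unfolding b_def using EV_facts(5,6)[OF that i] by auto
  note ql = q_limits[where K="{1..m}" and a=a and b=b and n="\<lambda>k nu. kap t nu k" and cc="\<lambda>k. t k * \<pi> k * \<mu> k i",
      OF _ a01 b01 a0 b0 na nb]
  have e1: "(\<integral>\<omega>. 1 - V nu k 1 i \<omega> \<partial>M nu) = 1 - a k nu" if "k \<in> {1..m}" for k nu
    unfolding a_def using EV_facts(2)[OF that i] .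
  have e2: "(\<integral>\<omega>. (1 - V nu k 1 i \<omega>)\<^sup>2 \<partial>M nu) = 1 - b k nu" for k nu
    unfolding b_def by simp
  have p1: "(\<Prod>k\<in>{1..m}. (\<integral>\<omega>. 1 - V nu k 1 i \<omega> \<partial>M nu) ^ kap t nu k) = (\<Prod>k\<in>{1..m}. (1 - a k nu) ^ kap t nu k)" for nu
    by (intro prod.cong refl) (simp only: e1)
  have p2: "(\<Prod>k\<in>{1..m}. (\<integral>\<omega>. (1 - V nu k 1 i \<omega>)\<^sup>2 \<partial>M nu) ^ kap t nu k) = (\<Prod>k\<in>{1..m}. (1 - b k nu) ^ kap t nu k)" for nu
    by (intro prod.cong refl) (simp only: e2)
  show "(\<lambda>nu. \<Prod>k\<in>{1..m}. (\<integral>\<omega>. 1 - V nu k 1 i \<omega> \<partial>M nu) ^ kap t nu k)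
           \<longlonglongrightarrow> exp (- (\<Sum>k\<in>{1..m}. t k * \<pi> k * \<mu> k i))"
    unfolding p1 using ql(1) by simp
  show "(\<lambda>nu. (\<Prod>k\<in>{1..m}. (\<integral>\<omega>. (1 - V nu k 1 i \<omega>)\<^sup>2 \<partial>M nu) ^ kap t nu k)
              - (\<Prod>k\<in>{1..m}. (\<integral>\<omega>. 1 - V nu k 1 i \<omega> \<partial>M nu) ^ kap t nu k)\<^sup>2) \<longlonglongrightarrow> 0"
    unfolding p1 p2 using ql(2) by simp
qed

end

context epi begin

lemma Xcount_kap: "Xcount m N \<pi> C nu i t \<omega> = real (Xn m N C nu i (kap t nu) \<omega>)"
proof -
  have "kap t nu = (\<lambda>k. nat \<lfloor>t k * Ntil m N \<pi> nu k\<rfloor>)" by (rule ext) (simp add: kap_def)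
  then show ?thesis by (simp add: Xcount_Xn)
qed

lemma Ntil_pos: "i \<in> {1..m} \<Longrightarrow> 0 < Ntil m N \<pi> nu i"
  unfolding Ntil_def using Nt_pos pi_pos by simp

lemma pointwise_meas:
  assumes i: "i \<in> {1..m}"
  shows "{\<omega>\<in>space (M nu). \<delta> < \<bar>Xcount m N \<pi> C nu i t \<omega> / Ntil m N \<pi> nu i - r\<bar>} \<in> sets (M nu)"
proof -
  have [measurable]: "(\<lambda>\<omega>. real (Xn m N C nu i (kap t nu) \<omega>)) \<in> borel_measurable (M nu)"
    by (rule Xn_meas[OF model i])
  show ?thesis unfolding Xcount_kap by measurable
qed

lemma pointwise:
  assumes i: "i \<in> {1..m}" and t: "\<And>k. k \<in> {1..m} \<Longrightarrow> t k \<ge> 0" and d: "\<delta> > 0"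
  shows "(\<lambda>nu. measure (M nu) {\<omega>\<in>space (M nu). \<delta> < \<bar>Xcount m N \<pi> C nu i t \<omega> / Ntil m N \<pi> nu i - rfun m \<pi> \<mu> i t\<bar>}) \<longlonglongrightarrow> 0"
proof -
  define Q where "Q nu = (\<Prod>k\<in>{1..m}. (\<integral>\<omega>. 1 - V nu k 1 i \<omega> \<partial>M nu) ^ kap t nu k)" for nu
  define Q2 where "Q2 nu = (\<Prod>k\<in>{1..m}. (\<integral>\<omega>. (1 - V nu k 1 i \<omega>)\<^sup>2 \<partial>M nu) ^ kap t nu k)" for nu
  define R where "R = rfun m \<pi> \<mu> i t"
  define Bnd where "Bnd nu = (1 / real (N nu i) + (Q2 nu - (Q nu)\<^sup>2)) / (\<delta> / 3)\<^sup>2" for nu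
  have QL: "Q \<longlonglongrightarrow> exp (- (\<Sum>k\<in>{1..m}. t k * \<pi> k * \<mu> k i))"
    unfolding Q_def using q_lims(1)[OF i t] by simp
  have Q2L: "(\<lambda>nu. Q2 nu - (Q nu)\<^sup>2) \<longlonglongrightarrow> 0"
    unfolding Q_def Q2_def using q_lims(2)[OF i t] by simp
  have BL: "Bnd \<longlonglongrightarrow> 0"
  proof -
    have "Bnd \<longlonglongrightarrow> (0 + 0) / (\<delta> / 3)\<^sup>2"
      unfolding Bnd_def[abs_def] by (intro tendsto_intros Ni_inv i Q2L) (use d in auto)
    then show ?thesis by simp
  qed
  have ev1: "eventually (\<lambda>nu. dist (real (N nu i) / Ntil m N \<pi> nu i) 1 < \<delta> / 3) sequentially"
    using Ni_ratio[OF i] d by (intro tendstoD) auto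
  have RL: "(\<lambda>nu. 1 - Q nu) \<longlonglongrightarrow> R"
    unfolding R_def rfun_def by (intro tendsto_intros QL)
  have ev2: "eventually (\<lambda>nu. dist (1 - Q nu) R < \<delta> / 3) sequentially"
    using RL d by (intro tendstoD) auto
  show ?thesis
  proof (rule tendsto_sandwich[OF _ _ tendsto_const BL])
    show "eventually (\<lambda>nu. 0 \<le> measure (M nu) {\<omega>\<in>space (M nu). \<delta> < \<bar>Xcount m N \<pi> C nu i t \<omega> / Ntil m N \<pi> nu i - rfun m \<pi> \<mu> i t\<bar>}) sequentially"
      by simp
    show "eventually (\<lambda>nu. measure (M nu) {\<omega>\<in>space (M nu). \<delta> < \<bar>Xcount m N \<pi> C nu i t \<omega> / Ntil m N \<pi> nu i - rfun m \<pi> \<mu> i t\<bar>} \<le> Bnd nu) sequentially"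
      using ev1 ev2
    proof eventually_elim
      case (elim nu)
      interpret prob_space "M nu" using model_prob[OF model] .
      have Np: "N nu i \<ge> 1" using N_pos[OF i] .
      have Ntp: "0 < Ntil m N \<pi> nu i" using Ntil_pos[OF i] .
      have [measurable]: "(\<lambda>\<omega>. real (Xn m N C nu i (kap t nu) \<omega>)) \<in> borel_measurable (M nu)"
        by (rule Xn_meas[OF model i])
      have "measure (M nu) {\<omega>\<in>space (M nu). \<delta> < \<bar>Xcount m N \<pi> C nu i t \<omega> / Ntil m N \<pi> nu i - rfun m \<pi> \<mu> i t\<bar>}
          \<le> measure (M nu) {\<omega>\<in>space (M nu). \<delta> / 3 < \<bar>real (Xn m N C nu i (kap t nu) \<omega>) / N nu i - (1 - Q nu)\<bar>}"
      proof (rule finite_measure_mono)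
        show "{\<omega>\<in>space (M nu). \<delta> / 3 < \<bar>real (Xn m N C nu i (kap t nu) \<omega>) / N nu i - (1 - Q nu)\<bar>} \<in> sets (M nu)"
          by measurable
        show "{\<omega>\<in>space (M nu). \<delta> < \<bar>Xcount m N \<pi> C nu i t \<omega> / Ntil m N \<pi> nu i - rfun m \<pi> \<mu> i t\<bar>}
           \<subseteq> {\<omega>\<in>space (M nu). \<delta> / 3 < \<bar>real (Xn m N C nu i (kap t nu) \<omega>) / N nu i - (1 - Q nu)\<bar>}"
        proof safe
          fix \<omega> assume w: "\<omega> \<in> space (M nu)" and big: "\<delta> < \<bar>Xcount m N \<pi> C nu i t \<omega> / Ntil m N \<pi> nu i - rfun m \<pi> \<mu> i t\<bar>"
          define X where "X = real (Xn m N C nu i (kap t nu) \<omega>)"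
          have X0: "0 \<le> X" and XN: "X \<le> N nu i" unfolding X_def using Xn_le by auto
          have Nr: "0 < real (N nu i)" using Np by simp
          have "\<bar>X / Ntil m N \<pi> nu i - X / N nu i\<bar> = (X / N nu i) * \<bar>real (N nu i) / Ntil m N \<pi> nu i - 1\<bar>"
          proof -
            have "X / Ntil m N \<pi> nu i - X / N nu i = (X / N nu i) * (real (N nu i) / Ntil m N \<pi> nu i - 1)"
              using Nr Ntp by (simp add: field_simps)
            then show ?thesis using X0 Nr by (simp add: abs_mult)
          qed
          also have "\<dots> \<le> 1 * \<bar>real (N nu i) / Ntil m N \<pi> nu i - 1\<bar>"
            using X0 XN Nr by (intro mult_right_mono) auto
          also have "\<dots> < \<delta> / 3" using elim(1) by (simp add: dist_real_def)
          finally have A: "\<bar>X / Ntil m N \<pi> nu i - X / N nu i\<bar> < \<delta> / 3" .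
          have B: "\<bar>(1 - Q nu) - R\<bar> < \<delta> / 3" using elim(2) by (simp add: dist_real_def)
          have "\<delta> < \<bar>X / Ntil m N \<pi> nu i - R\<bar>" using big unfolding X_def R_def Xcount_kap .
          then show "\<delta> / 3 < \<bar>real (Xn m N C nu i (kap t nu) \<omega>) / N nu i - (1 - Q nu)\<bar>"
            using A B unfolding X_def[symmetric] by linarith
        qed
      qed
      also have "\<dots> \<le> Bnd nu"
        unfolding Bnd_def Q_def Q2_def using d by (intro per_nu_bound[OF model i Np]) auto
      finally show ?case .
    qed
  qed
qed

end

lemma Xn_mono: "(\<And>k. k \<in> {1..m} \<Longrightarrow> \<kappa> k \<le> \<kappa>' k) \<Longrightarrow> Xn m N C nu i \<kappa> \<omega> \<le> Xn m N C nu i \<kappa>' \<omega>"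
  unfolding Xn_def by (rule card_mono) (auto, meson atLeastAtMost_iff le_trans)

lemma Xn_restrict: "Xn m N C nu i (restrict \<kappa> {1..m}) \<omega> = Xn m N C nu i \<kappa> \<omega>"
  unfolding Xn_def by (intro arg_cong[where f=card]) auto

lemma grid1:
  fixes tk sk :: real and P :: nat
  assumes t: "0 \<le> tk" "tk \<le> sk" and P: "P \<ge> 1"
  shows "\<exists>a\<in>{0..P}. \<exists>b\<in>{0..P}. sk * a / P \<le> tk \<and> tk \<le> sk * b / P \<and> sk * b / P - sk * a / P \<le> sk / P"
proof (cases "sk = 0")
  case True
  then show ?thesis using t by (intro bexI[where x=0]) auto
next
  case False
  then have sk: "sk > 0" using t by simp
  have Pp: "real P > 0" using P by simp
  define x where "x = tk * P / sk"
  have x0: "0 \<le> x" unfolding x_def using t sk by simp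
  have xP: "x \<le> P" unfolding x_def using t sk Pp by (simp add: field_simps mult_right_mono)
  define a where "a = nat \<lfloor>x\<rfloor>"
  have ax: "real a \<le> x" "x < real a + 1" unfolding a_def using x0 by linarith+
  have aP: "a \<le> P" using ax xP by linarith
  have tk_eq: "tk = sk * x / P" unfolding x_def using sk Pp by simp
  show ?thesis
  proof (cases "a + 1 \<le> P")
    case True
    show ?thesis
    proof (intro bexI conjI)
      show "sk * a / P \<le> tk" unfolding tk_eq using ax sk Pp by (intro divide_right_mono mult_left_mono) auto
      show "tk \<le> sk * real (a + 1) / P" unfolding tk_eq using ax sk Pp by (intro divide_right_mono mult_left_mono) auto
      show "sk * real (a + 1) / P - sk * a / P \<le> sk / P" using Pp by (simp add: field_simps)
    qed (use aP True in auto)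
  next
    case False
    then have aP': "a = P" using aP by simp
    show ?thesis
    proof (intro bexI conjI)
      show "sk * a / P \<le> tk" unfolding tk_eq using ax sk Pp by (intro divide_right_mono mult_left_mono) auto
      show "tk \<le> sk * real P / P" using Pp t by simp
      show "sk * real P / P - sk * a / P \<le> sk / P" using Pp sk aP' by simp
    qed (use aP' in auto)
  qed
qed

definition gr :: "nat \<Rightarrow> (nat \<Rightarrow> real) \<Rightarrow> nat \<Rightarrow> (nat \<Rightarrow> nat) \<Rightarrow> nat \<Rightarrow> real" where
  "gr m s P p k = (if k \<in> {1..m} then s k * real (p k) / real P else 0)"

lemma grid:
  assumes P: "P \<ge> 1" and t: "t \<in> Dbox m s"
  shows "\<exists>p\<in>PiE {1..m} (\<lambda>_. {0..P}). \<exists>p'\<in>PiE {1..m} (\<lambda>_. {0..P}). \<forall>k\<in>{1..m}.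
           gr m s P p k \<le> t k \<and> t k \<le> gr m s P p' k \<and> gr m s P p' k - gr m s P p k \<le> s k / P"
proof -
  have "\<forall>k\<in>{1..m}. \<exists>ab. fst ab \<in> {0..P} \<and> snd ab \<in> {0..P} \<and> s k * fst ab / P \<le> t k \<and> t k \<le> s k * snd ab / P \<and> s k * snd ab / P - s k * fst ab / P \<le> s k / P"
  proof
    fix k assume k: "k \<in> {1..m}"
    have "0 \<le> t k" "t k \<le> s k" using t k unfolding Dbox_def by auto
    from grid1[OF this P] obtain a b where "a \<in> {0..P}" "b \<in> {0..P}" "s k * a / P \<le> t k" "t k \<le> s k * b / P" "s k * b / P - s k * a / P \<le> s k / P"
      by blast
    then show "\<exists>ab. fst ab \<in> {0..P} \<and> snd ab \<in> {0..P} \<and> s k * fst ab / P \<le> t k \<and> t k \<le> s k * snd ab / P \<and> s k * snd ab / P - s k * fst ab / P \<le> s k / P"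
      by (intro exI[where x="(a,b)"]) auto
  qed
  then obtain f where f: "\<And>k. k \<in> {1..m} \<Longrightarrow> fst (f k) \<in> {0..P} \<and> snd (f k) \<in> {0..P} \<and> s k * fst (f k) / P \<le> t k \<and> t k \<le> s k * snd (f k) / P \<and> s k * snd (f k) / P - s k * fst (f k) / P \<le> s k / P"
    by metis
  show ?thesis
    by (rule bexI[where x="restrict (\<lambda>k. fst (f k)) {1..m}"], rule bexI[where x="restrict (\<lambda>k. snd (f k)) {1..m}"])
       (use f in \<open>auto simp: gr_def PiE_def\<close>)
qed

lemma gr_Dbox: "p \<in> PiE {1..m} (\<lambda>_. {0..P}) \<Longrightarrow> P \<ge> 1 \<Longrightarrow> (\<And>k. k \<in> {1..m} \<Longrightarrow> s k \<ge> 0) \<Longrightarrow> gr m s P p \<in> Dbox m s"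
  unfolding Dbox_def gr_def
proof safe
  fix k assume p: "p \<in> PiE {1..m} (\<lambda>_. {0..P})" and P: "P \<ge> 1" and s: "\<And>k. k \<in> {1..m} \<Longrightarrow> s k \<ge> 0" and k: "k \<in> {1..m}"
  have pk: "p k \<le> P" using p k by auto
  show "0 \<le> (if k \<in> {1..m} then s k * real (p k) / real P else 0)" using s[OF k] k by simp
  have "s k * real (p k) / real P \<le> s k * real P / real P"
    using s[OF k] pk P by (intro divide_right_mono mult_left_mono) auto
  then show "(if k \<in> {1..m} then s k * real (p k) / real P else 0) \<le> s k" using k P by simp
qed

lemma rfun_lip:
  assumes a0: "\<And>k. k \<in> {1..m} \<Longrightarrow> 0 \<le> a k" and ab: "\<And>k. k \<in> {1..m} \<Longrightarrow> a k \<le> b k"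
    and pi: "\<And>k. k \<in> {1..m} \<Longrightarrow> \<pi> k > 0" and mu: "\<And>k. k \<in> {1..m} \<Longrightarrow> \<mu> k i \<ge> 0"
  shows "rfun m \<pi> \<mu> i a \<le> rfun m \<pi> \<mu> i b"
    and "rfun m \<pi> \<mu> i b - rfun m \<pi> \<mu> i a \<le> (\<Sum>k\<in>{1..m}. (b k - a k) * \<pi> k * \<mu> k i)"
proof -
  define A where "A = (\<Sum>k\<in>{1..m}. a k * \<pi> k * \<mu> k i)"
  define B where "B = (\<Sum>k\<in>{1..m}. b k * \<pi> k * \<mu> k i)"
  have A0: "0 \<le> A" unfolding A_def
  proof (intro sum_nonneg)
    fix k assume k: "k \<in> {1..m}"
    show "0 \<le> a k * \<pi> k * \<mu> k i" using a0[OF k] pi[OF k] mu[OF k] by simp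
  qed
  have AB: "A \<le> B" unfolding A_def B_def using ab pi mu
    by (intro sum_mono mult_right_mono) (auto intro!: mult_nonneg_nonneg less_imp_le)
  have BA: "B - A = (\<Sum>k\<in>{1..m}. (b k - a k) * \<pi> k * \<mu> k i)"
    unfolding A_def B_def sum_subtractf[symmetric] by (intro sum.cong) (auto simp: algebra_simps)
  show "rfun m \<pi> \<mu> i a \<le> rfun m \<pi> \<mu> i b"
    unfolding rfun_def A_def[symmetric] B_def[symmetric] using AB by simp
  have "exp (- A) - exp (- B) = exp (- A) * (1 - exp (A - B))"
    by (simp add: algebra_simps exp_diff exp_minus field_simps)
  also have "\<dots> \<le> 1 * (B - A)"
  proof (rule mult_mono)
    show "exp (- A) \<le> 1" using A0 by simp
    show "1 - exp (A - B) \<le> B - A" using exp_ge_add_one_self[of "A - B"] by linarith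
    show "0 \<le> 1 - exp (A - B)" using AB by simp
  qed simp
  finally show "rfun m \<pi> \<mu> i b - rfun m \<pi> \<mu> i a \<le> (\<Sum>k\<in>{1..m}. (b k - a k) * \<pi> k * \<mu> k i)"
    unfolding rfun_def A_def[symmetric] B_def[symmetric] BA[symmetric] by simp
qed

lemma fin_family_meas:
  assumes K: "finite K" and R: "finite R"
    and meas: "\<And>\<kappa> S. \<kappa> \<in> K \<Longrightarrow> S \<subseteq> R \<Longrightarrow> {\<omega>\<in>space M. \<Phi> \<kappa> \<omega> \<in> S} \<in> sets M"
    and key: "\<And>t. t \<in> D \<Longrightarrow> key t \<in> K"
    and PhiR: "\<And>\<kappa> \<omega>. \<kappa> \<in> K \<Longrightarrow> \<omega> \<in> space M \<Longrightarrow> \<Phi> \<kappa> \<omega> \<in> R"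
  shows "{\<omega>\<in>space M. \<exists>t\<in>D. Pr t (\<Phi> (key t) \<omega>)} \<in> sets M"
proof -
  have eq: "{\<omega>\<in>space M. \<exists>t\<in>D. Pr t (\<Phi> (key t) \<omega>)} = \<Union> ((\<lambda>t. {\<omega>\<in>space M. \<Phi> (key t) \<omega> \<in> {x\<in>R. Pr t x}}) ` D)"
    using key PhiR by auto
  have sub: "(\<lambda>t. {\<omega>\<in>space M. \<Phi> (key t) \<omega> \<in> {x\<in>R. Pr t x}}) ` D \<subseteq> (\<lambda>(\<kappa>,S). {\<omega>\<in>space M. \<Phi> \<kappa> \<omega> \<in> S}) ` (K \<times> Pow R)"
  proof
    fix A assume "A \<in> (\<lambda>t. {\<omega>\<in>space M. \<Phi> (key t) \<omega> \<in> {x\<in>R. Pr t x}}) ` D"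
    then obtain t where t: "t \<in> D" "A = {\<omega>\<in>space M. \<Phi> (key t) \<omega> \<in> {x\<in>R. Pr t x}}" by auto
    show "A \<in> (\<lambda>(\<kappa>,S). {\<omega>\<in>space M. \<Phi> \<kappa> \<omega> \<in> S}) ` (K \<times> Pow R)"
      using t key by (intro image_eqI[where x="(key t, {x\<in>R. Pr t x})"]) auto
  qed
  have fin: "finite ((\<lambda>t. {\<omega>\<in>space M. \<Phi> (key t) \<omega> \<in> {x\<in>R. Pr t x}}) ` D)"
    by (rule finite_subset[OF sub]) (use K R in auto)
  have ss: "(\<lambda>t. {\<omega>\<in>space M. \<Phi> (key t) \<omega> \<in> {x\<in>R. Pr t x}}) ` D \<subseteq> sets M"
  proof
    fix A assume "A \<in> (\<lambda>t. {\<omega>\<in>space M. \<Phi> (key t) \<omega> \<in> {x\<in>R. Pr t x}}) ` D"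
    then obtain t where t: "t \<in> D" "A = {\<omega>\<in>space M. \<Phi> (key t) \<omega> \<in> {x\<in>R. Pr t x}}" by auto
    show "A \<in> sets M" unfolding t(2) by (rule meas[OF key[OF t(1)]]) auto
  qed
  show ?thesis unfolding eq using fin ss by (rule sets.finite_Union)
qed

context epi begin

definition Phiv :: "nat \<Rightarrow> (nat \<Rightarrow> nat) \<Rightarrow> 'a \<Rightarrow> nat \<Rightarrow> real" where
  "Phiv nu \<kappa> \<omega> = (\<lambda>i\<in>{1..m}. real (Xn m N C nu i \<kappa> \<omega>))"

lemma Phiv_meas:
  assumes S: "S \<subseteq> PiE {1..m} (\<lambda>i. real ` {0..N nu i})"
  shows "{\<omega>\<in>space (M nu). Phiv nu \<kappa> \<omega> \<in> S} \<in> sets (M nu)"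
proof -
  have eq: "{\<omega>\<in>space (M nu). Phiv nu \<kappa> \<omega> \<in> S} = (\<Union>x\<in>S. \<Inter>i\<in>{1..m}. {\<omega>\<in>space (M nu). real (Xn m N C nu i \<kappa> \<omega>) = x i})"
  proof (intro set_eqI iffI)
    fix \<omega> assume "\<omega> \<in> {\<omega>\<in>space (M nu). Phiv nu \<kappa> \<omega> \<in> S}"
    then show "\<omega> \<in> (\<Union>x\<in>S. \<Inter>i\<in>{1..m}. {\<omega>\<in>space (M nu). real (Xn m N C nu i \<kappa> \<omega>) = x i})"
      by (intro UN_I[where a="Phiv nu \<kappa> \<omega>"]) (auto simp: Phiv_def)
  next
    fix \<omega> assume "\<omega> \<in> (\<Union>x\<in>S. \<Inter>i\<in>{1..m}. {\<omega>\<in>space (M nu). real (Xn m N C nu i \<kappa> \<omega>) = x i})"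
    then obtain x where x: "x \<in> S" "\<And>i. i \<in> {1..m} \<Longrightarrow> \<omega> \<in> space (M nu) \<and> real (Xn m N C nu i \<kappa> \<omega>) = x i" by auto
    have xe: "x \<in> extensional {1..m}" using x(1) S by (auto simp: PiE_def)
    have "Phiv nu \<kappa> \<omega> = x"
    proof
      fix i show "Phiv nu \<kappa> \<omega> i = x i"
        using x(2)[of i] xe by (cases "i \<in> {1..m}") (auto simp: Phiv_def extensional_def)
    qed
    moreover have "\<omega> \<in> space (M nu)" using x(2)[of 1] m by auto
    ultimately show "\<omega> \<in> {\<omega>\<in>space (M nu). Phiv nu \<kappa> \<omega> \<in> S}" using x(1) by auto
  qed
  have finS: "finite S" by (rule finite_subset[OF S]) (auto intro!: finite_PiE)
  have "(\<Union>x\<in>S. \<Inter>i\<in>{1..m}. {\<omega>\<in>space (M nu). real (Xn m N C nu i \<kappa> \<omega>) = x i}) \<in> sets (M nu)"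
  proof (intro sets.finite_UN finS ballI sets.finite_INT)
    fix x i assume i: "i \<in> {1..m}"
    have [measurable]: "(\<lambda>\<omega>. real (Xn m N C nu i \<kappa> \<omega>)) \<in> borel_measurable (M nu)"
      by (rule Xn_meas[OF model i])
    show "{\<omega>\<in>space (M nu). real (Xn m N C nu i \<kappa> \<omega>) = x i} \<in> sets (M nu)" by measurable
  qed (use m in auto)
  then show ?thesis unfolding eq .
qed

lemma Phiv_R: "Phiv nu \<kappa> \<omega> \<in> PiE {1..m} (\<lambda>i. real ` {0..N nu i})"
  unfolding Phiv_def
proof (rule restrict_PiE_iff[THEN iffD2], intro ballI)
  fix i assume "i \<in> {1..m}"
  show "real (Xn m N C nu i \<kappa> \<omega>) \<in> real ` {0..N nu i}"
    by (rule image_eqI[where x="Xn m N C nu i \<kappa> \<omega>"]) (simp_all add: Xn_le)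
qed

lemma kap_mono: "k \<in> {1..m} \<Longrightarrow> t k \<le> t' k \<Longrightarrow> kap t nu k \<le> kap t' nu k"
  unfolding kap_def using Ntil_pos[of k nu]
  by (intro nat_mono floor_mono mult_right_mono) auto

lemma sup_event_meas:
  assumes s: "\<And>k. k \<in> {1..m} \<Longrightarrow> s k \<ge> 0"
  shows "{\<omega>\<in>space (M nu). \<exists>t\<in>Dbox m s. Pr t (Phiv nu (restrict (kap t nu) {1..m}) \<omega>)} \<in> sets (M nu)"
proof (rule fin_family_meas[where K="PiE {1..m} (\<lambda>k. {0..kap s nu k})" and R="PiE {1..m} (\<lambda>i. real ` {0..N nu i})"
    and \<Phi>="Phiv nu" and key="\<lambda>t. restrict (kap t nu) {1..m}" and Pr=Pr and D="Dbox m s" and M="M nu"])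
  show "finite (PiE {1..m} (\<lambda>k. {0..kap s nu k}))" by (auto intro!: finite_PiE)
  show "finite (PiE {1..m} (\<lambda>i. real ` {0..N nu i}))" by (auto intro!: finite_PiE)
  show "{\<omega>\<in>space (M nu). Phiv nu \<kappa> \<omega> \<in> S} \<in> sets (M nu)" if "S \<subseteq> PiE {1..m} (\<lambda>i. real ` {0..N nu i})" for \<kappa> S
    using Phiv_meas[OF that] .
  show "restrict (kap t nu) {1..m} \<in> PiE {1..m} (\<lambda>k. {0..kap s nu k})" if "t \<in> Dbox m s" for t
  proof (rule restrict_PiE_iff[THEN iffD2], intro ballI)
    fix k assume k: "k \<in> {1..m}"
    have "t k \<le> s k" using that k unfolding Dbox_def by auto
    then show "kap t nu k \<in> {0..kap s nu k}" using kap_mono[OF k] by simp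
  qed
  show "Phiv nu \<kappa> \<omega> \<in> PiE {1..m} (\<lambda>i. real ` {0..N nu i})" for \<kappa> \<omega> by (rule Phiv_R)
qed

lemma Phiv_key: "i \<in> {1..m} \<Longrightarrow> Phiv nu (restrict (kap t nu) {1..m}) \<omega> i = Xcount m N \<pi> C nu i t \<omega>"
  unfolding Phiv_def Xn_restrict Xcount_kap by simp

end

context epi begin

definition fi :: "nat \<Rightarrow> nat \<Rightarrow> (nat \<Rightarrow> real) \<Rightarrow> 'a \<Rightarrow> real" where
  "fi i nu t \<omega> = \<bar>Xcount m N \<pi> C nu i t \<omega> / Ntil m N \<pi> nu i - rfun m \<pi> \<mu> i t\<bar>"

lemma rfun_01:
  assumes i: "i \<in> {1..m}" and t: "\<And>k. k \<in> {1..m} \<Longrightarrow> 0 \<le> t k"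
  shows "0 \<le> rfun m \<pi> \<mu> i t" "rfun m \<pi> \<mu> i t \<le> 1"
proof -
  have "0 \<le> (\<Sum>k\<in>{1..m}. t k * \<pi> k * \<mu> k i)"
  proof (intro sum_nonneg)
    fix k assume k: "k \<in> {1..m}"
    show "0 \<le> t k * \<pi> k * \<mu> k i" using t[OF k] pi_pos[OF k] mu_nonneg[OF k i] by simp
  qed
  then show "0 \<le> rfun m \<pi> \<mu> i t" "rfun m \<pi> \<mu> i t \<le> 1" unfolding rfun_def by auto
qed

lemma Dbox_nonneg: "t \<in> Dbox m s \<Longrightarrow> k \<in> {1..m} \<Longrightarrow> 0 \<le> t k"
  unfolding Dbox_def by auto

lemma fi_bound:
  assumes i: "i \<in> {1..m}" and t: "t \<in> Dbox m s"
  shows "fi i nu t \<omega> \<le> real (N nu i) / Ntil m N \<pi> nu i + 1"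
proof -
  have Np: "0 < Ntil m N \<pi> nu i" using Ntil_pos[OF i] .
  have X0: "0 \<le> Xcount m N \<pi> C nu i t \<omega>" and XN: "Xcount m N \<pi> C nu i t \<omega> \<le> N nu i"
    unfolding Xcount_kap using Xn_le by auto
  have "Xcount m N \<pi> C nu i t \<omega> / Ntil m N \<pi> nu i \<le> real (N nu i) / Ntil m N \<pi> nu i"
    using XN Np by (intro divide_right_mono) auto
  moreover have "0 \<le> Xcount m N \<pi> C nu i t \<omega> / Ntil m N \<pi> nu i" using X0 Np by simp
  moreover have "0 \<le> rfun m \<pi> \<mu> i t" "rfun m \<pi> \<mu> i t \<le> 1"
    using rfun_01[OF i, of t] Dbox_nonneg[OF t] by auto
  ultimately show ?thesis unfolding fi_def by linarith
qed

lemma fi_nonneg: "0 \<le> fi i nu t \<omega>" unfolding fi_def by simp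

lemma Dbox_ne: assumes s: "\<And>k. k \<in> {1..m} \<Longrightarrow> s k \<ge> 0" shows "(\<lambda>_. 0) \<in> Dbox m s"
  unfolding Dbox_def using s by auto

lemma fi_bdd: "i \<in> {1..m} \<Longrightarrow> bdd_above ((\<lambda>t. fi i nu t \<omega>) ` Dbox m s)"
  by (rule bdd_aboveI2[where M="real (N nu i) / Ntil m N \<pi> nu i + 1"]) (rule fi_bound)

lemma Xcount_mono:
  assumes "\<And>k. k \<in> {1..m} \<Longrightarrow> t k \<le> t' k"
  shows "Xcount m N \<pi> C nu i t \<omega> \<le> Xcount m N \<pi> C nu i t' \<omega>"
proof -
  have "Xn m N C nu i (kap t nu) \<omega> \<le> Xn m N C nu i (kap t' nu) \<omega>"
    by (rule Xn_mono) (use kap_mono assms in blast)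
  then show ?thesis unfolding Xcount_kap by simp
qed

lemma grid_det:
  assumes i: "i \<in> {1..m}" and s: "\<And>k. k \<in> {1..m} \<Longrightarrow> s k \<ge> 0" and P: "P \<ge> 1"
    and L: "(\<Sum>k\<in>{1..m}. (s k / P) * \<pi> k * \<mu> k i) \<le> e"
    and G: "\<And>p. p \<in> PiE {1..m} (\<lambda>_. {0..P}) \<Longrightarrow> fi i nu (gr m s P p) \<omega> \<le> e"
    and t: "t \<in> Dbox m s"
  shows "fi i nu t \<omega> \<le> 2 * e"
proof -
  obtain p p' where p: "p \<in> PiE {1..m} (\<lambda>_. {0..P})" and p': "p' \<in> PiE {1..m} (\<lambda>_. {0..P})"
    and pp: "\<And>k. k \<in> {1..m} \<Longrightarrow> gr m s P p k \<le> t k \<and> t k \<le> gr m s P p' k \<and> gr m s P p' k - gr m s P p k \<le> s k / P"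
    using grid[OF P t] by blast
  define lo where "lo = gr m s P p"
  define hi where "hi = gr m s P p'"
  have loD: "lo \<in> Dbox m s" unfolding lo_def by (rule gr_Dbox[OF p P]) (rule s)
  have hiD: "hi \<in> Dbox m s" unfolding hi_def by (rule gr_Dbox[OF p' P]) (rule s)
  have lot: "\<And>k. k \<in> {1..m} \<Longrightarrow> lo k \<le> t k" and thi: "\<And>k. k \<in> {1..m} \<Longrightarrow> t k \<le> hi k"
    and hl: "\<And>k. k \<in> {1..m} \<Longrightarrow> hi k - lo k \<le> s k / P"
    using pp unfolding lo_def hi_def by auto
  have lohi: "\<And>k. k \<in> {1..m} \<Longrightarrow> lo k \<le> hi k" using lot thi by (meson order.trans)
  have Np: "0 < Ntil m N \<pi> nu i" using Ntil_pos[OF i] .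
  define X where "X u = Xcount m N \<pi> C nu i u \<omega> / Ntil m N \<pi> nu i" for u
  define r where "r u = rfun m \<pi> \<mu> i u" for u
  have X1: "X lo \<le> X t" unfolding X_def using Xcount_mono[OF lot] Np by (intro divide_right_mono) auto
  have X2: "X t \<le> X hi" unfolding X_def using Xcount_mono[OF thi] Np by (intro divide_right_mono) auto
  have r1: "r lo \<le> r t" unfolding r_def
    by (rule rfun_lip(1)) (use Dbox_nonneg[OF loD] lot pi_pos mu_nonneg i in auto)
  have r2: "r t \<le> r hi" unfolding r_def
    by (rule rfun_lip(1)) (use Dbox_nonneg[OF t] thi pi_pos mu_nonneg i in auto)
  have "r hi - r lo \<le> (\<Sum>k\<in>{1..m}. (hi k - lo k) * \<pi> k * \<mu> k i)" unfolding r_def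
    by (rule rfun_lip(2)) (use Dbox_nonneg[OF loD] lohi pi_pos mu_nonneg i in auto)
  also have "\<dots> \<le> (\<Sum>k\<in>{1..m}. (s k / P) * \<pi> k * \<mu> k i)"
  proof (intro sum_mono)
    fix k assume k: "k \<in> {1..m}"
    have "0 \<le> \<pi> k * \<mu> k i" using pi_pos[OF k] mu_nonneg[OF k i] by simp
    then show "(hi k - lo k) * \<pi> k * \<mu> k i \<le> (s k / P) * \<pi> k * \<mu> k i"
      using hl[OF k] mult_right_mono[of "hi k - lo k" "s k / P" "\<pi> k * \<mu> k i"] by (simp add: mult.assoc)
  qed
  also have "\<dots> \<le> e" by (rule L)
  finally have rr: "r hi - r lo \<le> e" .
  have g1: "\<bar>X lo - r lo\<bar> \<le> e" using G[OF p] unfolding fi_def X_def r_def lo_def .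
  have g2: "\<bar>X hi - r hi\<bar> \<le> e" using G[OF p'] unfolding fi_def X_def r_def hi_def .
  have "\<bar>X t - r t\<bar> \<le> 2 * e" using X1 X2 r1 r2 rr g1 g2 by (simp add: abs_le_iff)
  then show ?thesis unfolding fi_def X_def r_def .
qed

lemma Y1_lim:
  assumes i: "i \<in> {1..m}" and s: "\<And>k. k \<in> {1..m} \<Longrightarrow> s k \<ge> 0" and eps: "\<epsilon> > 0"
  shows "(\<lambda>nu. measure (M nu) {\<omega>\<in>space (M nu). \<epsilon> < \<bar>SUP t\<in>Dbox m s. fi i nu t \<omega>\<bar>}) \<longlonglongrightarrow> 0"
proof -
  have Dne: "(\<lambda>_. 0) \<in> Dbox m s" by (rule Dbox_ne) (rule s)
  define L where "L = (\<Sum>k\<in>{1..m}. s k * \<pi> k * \<mu> k i)"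
  have L0: "0 \<le> L" unfolding L_def
  proof (intro sum_nonneg)
    fix k assume k: "k \<in> {1..m}"
    show "0 \<le> s k * \<pi> k * \<mu> k i" using s[OF k] pi_pos[OF k] mu_nonneg[OF k i] by simp
  qed
  define P where "P = nat \<lceil>2 * L / \<epsilon>\<rceil> + 1"
  have P1: "P \<ge> 1" unfolding P_def by simp
  have Pp: "0 < real P" using P1 by simp
  have "2 * L / \<epsilon> \<le> real P" unfolding P_def by linarith
  then have "2 * L \<le> real P * \<epsilon>" using eps by (simp add: field_simps)
  then have LP: "L / P \<le> \<epsilon> / 2" using Pp by (simp add: field_simps)
  have Ls: "(\<Sum>k\<in>{1..m}. (s k / P) * \<pi> k * \<mu> k i) = L / P"
    unfolding L_def sum_divide_distrib by (intro sum.cong) auto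
  define G where "G = PiE {1..m} (\<lambda>_::nat. {0..P})"
  have finG: "finite G" unfolding G_def by (auto intro!: finite_PiE)
  define E where "E nu p = {\<omega>\<in>space (M nu). \<epsilon> / 2 < \<bar>Xcount m N \<pi> C nu i (gr m s P p) \<omega> / Ntil m N \<pi> nu i - rfun m \<pi> \<mu> i (gr m s P p)\<bar>}" for nu p
  have Emeas: "E nu p \<in> sets (M nu)" for nu p unfolding E_def by (rule pointwise_meas[OF i])
  have Elim: "(\<lambda>nu. measure (M nu) (E nu p)) \<longlonglongrightarrow> 0" if p: "p \<in> G" for p
  proof -
    have gD: "gr m s P p \<in> Dbox m s" by (rule gr_Dbox[OF p[unfolded G_def] P1]) (rule s)
    have "\<And>k. k \<in> {1..m} \<Longrightarrow> 0 \<le> gr m s P p k"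
      using Dbox_nonneg[OF gD] by blast
    then show ?thesis unfolding E_def using eps by (intro pointwise i) auto
  qed
  have sumlim: "(\<lambda>nu. \<Sum>p\<in>G. measure (M nu) (E nu p)) \<longlonglongrightarrow> 0"
    by (rule tendsto_null_sum) (rule Elim)
  show ?thesis
  proof (rule tendsto_sandwich[OF _ _ tendsto_const sumlim])
    show "eventually (\<lambda>nu. 0 \<le> measure (M nu) {\<omega>\<in>space (M nu). \<epsilon> < \<bar>SUP t\<in>Dbox m s. fi i nu t \<omega>\<bar>}) sequentially"
      by simp
    show "eventually (\<lambda>nu. measure (M nu) {\<omega>\<in>space (M nu). \<epsilon> < \<bar>SUP t\<in>Dbox m s. fi i nu t \<omega>\<bar>} \<le> (\<Sum>p\<in>G. measure (M nu) (E nu p))) sequentially"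
    proof (rule always_eventually, rule allI)
      fix nu
      interpret prob_space "M nu" using model_prob[OF model] .
      have "measure (M nu) {\<omega>\<in>space (M nu). \<epsilon> < \<bar>SUP t\<in>Dbox m s. fi i nu t \<omega>\<bar>} \<le> measure (M nu) (\<Union>p\<in>G. E nu p)"
      proof (rule finite_measure_mono)
        show "(\<Union>p\<in>G. E nu p) \<in> sets (M nu)" using finG Emeas by auto
        show "{\<omega>\<in>space (M nu). \<epsilon> < \<bar>SUP t\<in>Dbox m s. fi i nu t \<omega>\<bar>} \<subseteq> (\<Union>p\<in>G. E nu p)"
        proof (rule subsetI, rule ccontr)
          fix \<omega> assume w: "\<omega> \<in> {\<omega>\<in>space (M nu). \<epsilon> < \<bar>SUP t\<in>Dbox m s. fi i nu t \<omega>\<bar>}" and nw: "\<omega> \<notin> (\<Union>p\<in>G. E nu p)"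
          have Gle: "fi i nu (gr m s P p) \<omega> \<le> \<epsilon> / 2" if "p \<in> PiE {1..m} (\<lambda>_. {0..P})" for p
            using nw w that unfolding E_def G_def fi_def by auto
          have all: "fi i nu t \<omega> \<le> 2 * (\<epsilon> / 2)" if "t \<in> Dbox m s" for t
            by (rule grid_det[OF i s P1 _ Gle that]) (use Ls LP in auto)
          have "(SUP t\<in>Dbox m s. fi i nu t \<omega>) \<le> \<epsilon>"
            using all Dne by (intro cSUP_least) auto
          moreover have "0 \<le> (SUP t\<in>Dbox m s. fi i nu t \<omega>)"
            using Dne fi_bdd[OF i] fi_nonneg by (intro cSUP_upper2) auto
          ultimately show False using w by simp
        qed
      qed
      also have "\<dots> \<le> (\<Sum>p\<in>G. measure (M nu) (E nu p))"
        using finG Emeas by (intro measure_UNION_le) auto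
      finally show "measure (M nu) {\<omega>\<in>space (M nu). \<epsilon> < \<bar>SUP t\<in>Dbox m s. fi i nu t \<omega>\<bar>} \<le> (\<Sum>p\<in>G. measure (M nu) (E nu p))" .
    qed
  qed
qed

end

context epi begin

lemma SUP_fi_nonneg:
  assumes i: "i \<in> {1..m}" and s: "\<And>k. k \<in> {1..m} \<Longrightarrow> s k \<ge> 0"
  shows "0 \<le> (SUP t\<in>Dbox m s. fi i nu t \<omega>)"
proof -
  have Dne: "(\<lambda>_. 0) \<in> Dbox m s" by (rule Dbox_ne) (rule s)
  show ?thesis using Dne fi_bdd[OF i] fi_nonneg by (intro cSUP_upper2) auto
qed

lemma Y1_meas:
  assumes i: "i \<in> {1..m}" and s: "\<And>k. k \<in> {1..m} \<Longrightarrow> s k \<ge> 0"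
  shows "{\<omega>\<in>space (M nu). \<epsilon> < \<bar>SUP t\<in>Dbox m s. fi i nu t \<omega>\<bar>} \<in> sets (M nu)"
proof -
  have Dne: "(\<lambda>_. 0) \<in> Dbox m s" by (rule Dbox_ne) (rule s)
  have "{\<omega>\<in>space (M nu). \<epsilon> < \<bar>SUP t\<in>Dbox m s. fi i nu t \<omega>\<bar>}
      = {\<omega>\<in>space (M nu). \<exists>t\<in>Dbox m s. (\<lambda>t x. \<epsilon> < \<bar>x i / Ntil m N \<pi> nu i - rfun m \<pi> \<mu> i t\<bar>) t (Phiv nu (restrict (kap t nu) {1..m}) \<omega>)}"
  proof (intro Collect_cong conj_cong refl)
    fix \<omega>
    have "(\<epsilon> < \<bar>SUP t\<in>Dbox m s. fi i nu t \<omega>\<bar>) = (\<epsilon> < (SUP t\<in>Dbox m s. fi i nu t \<omega>))"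
    proof -
      have "0 \<le> (SUP t\<in>Dbox m s. fi i nu t \<omega>)" by (rule SUP_fi_nonneg[OF i]) (rule s)
      then show ?thesis by simp
    qed
    also have "\<dots> = (\<exists>t\<in>Dbox m s. \<epsilon> < fi i nu t \<omega>)"
      using Dne fi_bdd[OF i] by (intro less_cSUP_iff) auto
    also have "\<dots> = (\<exists>t\<in>Dbox m s. (\<lambda>t x. \<epsilon> < \<bar>x i / Ntil m N \<pi> nu i - rfun m \<pi> \<mu> i t\<bar>) t (Phiv nu (restrict (kap t nu) {1..m}) \<omega>))"
      unfolding fi_def Phiv_key[OF i] by simp
    finally show "(\<epsilon> < \<bar>SUP t\<in>Dbox m s. fi i nu t \<omega>\<bar>) = (\<exists>t\<in>Dbox m s. (\<lambda>t x. \<epsilon> < \<bar>x i / Ntil m N \<pi> nu i - rfun m \<pi> \<mu> i t\<bar>) t (Phiv nu (restrict (kap t nu) {1..m}) \<omega>))" .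
  qed
  also have "\<dots> \<in> sets (M nu)" by (rule sup_event_meas) (rule s)
  finally show ?thesis .
qed

definition gv :: "nat \<Rightarrow> (nat \<Rightarrow> real) \<Rightarrow> 'a \<Rightarrow> real" where
  "gv nu t \<omega> = sqrt (\<Sum>i\<in>{1..m}. (Xcount m N \<pi> C nu i t \<omega> / (real (Ntot m N nu) * \<pi> i) - rfun m \<pi> \<mu> i t)\<^sup>2)"

lemma gv_le: "gv nu t \<omega> \<le> (\<Sum>i\<in>{1..m}. fi i nu t \<omega>)"
  using L2_set_le_sum_abs[of "\<lambda>i. Xcount m N \<pi> C nu i t \<omega> / (real (Ntot m N nu) * \<pi> i) - rfun m \<pi> \<mu> i t" "{1..m}"]
  unfolding gv_def fi_def L2_set_def Ntil_def .

lemma gv_nonneg: "0 \<le> gv nu t \<omega>" unfolding gv_def by (intro real_sqrt_ge_zero sum_nonneg) auto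

lemma gv_bdd:
  shows "bdd_above ((\<lambda>t. gv nu t \<omega>) ` Dbox m s)"
proof (rule bdd_aboveI2[where M="\<Sum>i\<in>{1..m}. (real (N nu i) / Ntil m N \<pi> nu i + 1)"])
  fix t assume t: "t \<in> Dbox m s"
  have "gv nu t \<omega> \<le> (\<Sum>i\<in>{1..m}. fi i nu t \<omega>)" by (rule gv_le)
  also have "\<dots> \<le> (\<Sum>i\<in>{1..m}. (real (N nu i) / Ntil m N \<pi> nu i + 1))"
  proof (rule sum_mono)
    fix i assume i: "i \<in> {1..m}"
    show "fi i nu t \<omega> \<le> real (N nu i) / Ntil m N \<pi> nu i + 1" by (rule fi_bound[OF i t])
  qed
  finally show "gv nu t \<omega> \<le> (\<Sum>i\<in>{1..m}. (real (N nu i) / Ntil m N \<pi> nu i + 1))" .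
qed

lemma Y2_meas:
  assumes s: "\<And>k. k \<in> {1..m} \<Longrightarrow> s k \<ge> 0"
  shows "{\<omega>\<in>space (M nu). \<epsilon> < \<bar>SUP t\<in>Dbox m s. gv nu t \<omega>\<bar>} \<in> sets (M nu)"
proof -
  have Dne: "(\<lambda>_. 0) \<in> Dbox m s" by (rule Dbox_ne) (rule s)
  have nn: "0 \<le> (SUP t\<in>Dbox m s. gv nu t \<omega>)" for \<omega>
    using Dne gv_bdd gv_nonneg by (intro cSUP_upper2) auto
  have "{\<omega>\<in>space (M nu). \<epsilon> < \<bar>SUP t\<in>Dbox m s. gv nu t \<omega>\<bar>}
      = {\<omega>\<in>space (M nu). \<exists>t\<in>Dbox m s. (\<lambda>t x. \<epsilon> < sqrt (\<Sum>i\<in>{1..m}. (x i / (real (Ntot m N nu) * \<pi> i) - rfun m \<pi> \<mu> i t)\<^sup>2)) t (Phiv nu (restrict (kap t nu) {1..m}) \<omega>)}"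
  proof (intro Collect_cong conj_cong refl)
    fix \<omega>
    have "(\<epsilon> < \<bar>SUP t\<in>Dbox m s. gv nu t \<omega>\<bar>) = (\<epsilon> < (SUP t\<in>Dbox m s. gv nu t \<omega>))"
      using nn by simp
    also have "\<dots> = (\<exists>t\<in>Dbox m s. \<epsilon> < gv nu t \<omega>)"
      using Dne gv_bdd by (intro less_cSUP_iff) auto
    also have "\<dots> = (\<exists>t\<in>Dbox m s. (\<lambda>t x. \<epsilon> < sqrt (\<Sum>i\<in>{1..m}. (x i / (real (Ntot m N nu) * \<pi> i) - rfun m \<pi> \<mu> i t)\<^sup>2)) t (Phiv nu (restrict (kap t nu) {1..m}) \<omega>))"
    proof -
      have "(\<Sum>i\<in>{1..m}. (Phiv nu (restrict (kap t nu) {1..m}) \<omega> i / (real (Ntot m N nu) * \<pi> i) - rfun m \<pi> \<mu> i t)\<^sup>2)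
          = (\<Sum>i\<in>{1..m}. (Xcount m N \<pi> C nu i t \<omega> / (real (Ntot m N nu) * \<pi> i) - rfun m \<pi> \<mu> i t)\<^sup>2)" for t
      proof (intro sum.cong refl)
        fix i assume i: "i \<in> {1..m}"
        show "(Phiv nu (restrict (kap t nu) {1..m}) \<omega> i / (real (Ntot m N nu) * \<pi> i) - rfun m \<pi> \<mu> i t)\<^sup>2
          = (Xcount m N \<pi> C nu i t \<omega> / (real (Ntot m N nu) * \<pi> i) - rfun m \<pi> \<mu> i t)\<^sup>2"
          unfolding Phiv_key[OF i] ..
      qed
      then show ?thesis unfolding gv_def by simp
    qed
    finally show "(\<epsilon> < \<bar>SUP t\<in>Dbox m s. gv nu t \<omega>\<bar>) = (\<exists>t\<in>Dbox m s. (\<lambda>t x. \<epsilon> < sqrt (\<Sum>i\<in>{1..m}. (x i / (real (Ntot m N nu) * \<pi> i) - rfun m \<pi> \<mu> i t)\<^sup>2)) t (Phiv nu (restrict (kap t nu) {1..m}) \<omega>))" .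
  qed
  also have "\<dots> \<in> sets (M nu)" by (rule sup_event_meas) (rule s)
  finally show ?thesis .
qed

lemma Y2_lim:
  assumes s: "\<And>k. k \<in> {1..m} \<Longrightarrow> s k \<ge> 0" and eps: "\<epsilon> > 0"
  shows "(\<lambda>nu. measure (M nu) {\<omega>\<in>space (M nu). \<epsilon> < \<bar>SUP t\<in>Dbox m s. gv nu t \<omega>\<bar>}) \<longlonglongrightarrow> 0"
proof -
  have Dne: "(\<lambda>_. 0) \<in> Dbox m s" by (rule Dbox_ne) (rule s)
  have mp: "0 < real m" using m by simp
  define e where "e = \<epsilon> / real m"
  have e: "e > 0" unfolding e_def using eps mp by simp
  define E where "E nu i = {\<omega>\<in>space (M nu). e < \<bar>SUP t\<in>Dbox m s. fi i nu t \<omega>\<bar>}" for nu i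
  have Emeas: "E nu i \<in> sets (M nu)" if "i \<in> {1..m}" for nu i unfolding E_def by (rule Y1_meas[OF that]) (rule s)
  have sumlim: "(\<lambda>nu. \<Sum>i\<in>{1..m}. measure (M nu) (E nu i)) \<longlonglongrightarrow> 0"
  proof (rule tendsto_null_sum)
    fix i assume i: "i \<in> {1..m}"
    show "(\<lambda>nu. measure (M nu) (E nu i)) \<longlonglongrightarrow> 0" unfolding E_def by (rule Y1_lim[OF i _ e]) (rule s)
  qed
  show ?thesis
  proof (rule tendsto_sandwich[OF _ _ tendsto_const sumlim])
    show "eventually (\<lambda>nu. 0 \<le> measure (M nu) {\<omega>\<in>space (M nu). \<epsilon> < \<bar>SUP t\<in>Dbox m s. gv nu t \<omega>\<bar>}) sequentially"
      by simp
    show "eventually (\<lambda>nu. measure (M nu) {\<omega>\<in>space (M nu). \<epsilon> < \<bar>SUP t\<in>Dbox m s. gv nu t \<omega>\<bar>} \<le> (\<Sum>i\<in>{1..m}. measure (M nu) (E nu i))) sequentially"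
    proof (rule always_eventually, rule allI)
      fix nu
      interpret prob_space "M nu" using model_prob[OF model] .
      have "measure (M nu) {\<omega>\<in>space (M nu). \<epsilon> < \<bar>SUP t\<in>Dbox m s. gv nu t \<omega>\<bar>} \<le> measure (M nu) (\<Union>i\<in>{1..m}. E nu i)"
      proof (rule finite_measure_mono)
        show "(\<Union>i\<in>{1..m}. E nu i) \<in> sets (M nu)" using Emeas by auto
        show "{\<omega>\<in>space (M nu). \<epsilon> < \<bar>SUP t\<in>Dbox m s. gv nu t \<omega>\<bar>} \<subseteq> (\<Union>i\<in>{1..m}. E nu i)"
        proof (rule subsetI, rule ccontr)
          fix \<omega> assume w: "\<omega> \<in> {\<omega>\<in>space (M nu). \<epsilon> < \<bar>SUP t\<in>Dbox m s. gv nu t \<omega>\<bar>}" and nw: "\<omega> \<notin> (\<Union>i\<in>{1..m}. E nu i)"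
          have Yle: "(SUP t\<in>Dbox m s. fi i nu t \<omega>) \<le> e" if i: "i \<in> {1..m}" for i
          proof -
            have "0 \<le> (SUP t\<in>Dbox m s. fi i nu t \<omega>)" by (rule SUP_fi_nonneg[OF i]) (rule s)
            moreover have "\<omega> \<notin> E nu i" using nw i by blast
            ultimately show ?thesis using w unfolding E_def by auto
          qed
          have "(SUP t\<in>Dbox m s. gv nu t \<omega>) \<le> (\<Sum>i\<in>{1..m}. e)"
          proof (rule cSUP_least)
            show "Dbox m s \<noteq> {}" using Dne by auto
            fix t assume t: "t \<in> Dbox m s"
            have "gv nu t \<omega> \<le> (\<Sum>i\<in>{1..m}. fi i nu t \<omega>)" by (rule gv_le)
            also have "\<dots> \<le> (\<Sum>i\<in>{1..m}. e)"
            proof (rule sum_mono)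
              fix i assume i: "i \<in> {1..m}"
              have "fi i nu t \<omega> \<le> (SUP t\<in>Dbox m s. fi i nu t \<omega>)"
                using t fi_bdd[OF i] by (intro cSUP_upper) auto
              then show "fi i nu t \<omega> \<le> e" using Yle[OF i] by simp
            qed
            finally show "gv nu t \<omega> \<le> (\<Sum>i\<in>{1..m}. e)" .
          qed
          also have "(\<Sum>i\<in>{1..m}. e) = \<epsilon>" unfolding e_def using mp by simp
          finally have "(SUP t\<in>Dbox m s. gv nu t \<omega>) \<le> \<epsilon>" .
          moreover have "0 \<le> (SUP t\<in>Dbox m s. gv nu t \<omega>)"
            using Dne gv_bdd gv_nonneg by (intro cSUP_upper2) auto
          ultimately show False using w by simp
        qed
      qed
      also have "\<dots> \<le> (\<Sum>i\<in>{1..m}. measure (M nu) (E nu i))"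
        using Emeas by (intro measure_UNION_le) auto
      finally show "measure (M nu) {\<omega>\<in>space (M nu). \<epsilon> < \<bar>SUP t\<in>Dbox m s. gv nu t \<omega>\<bar>} \<le> (\<Sum>i\<in>{1..m}. measure (M nu) (E nu i))" .
    qed
  qed
qed

end

theorem lemma3p2:
  fixes m :: nat and N :: "nat \<Rightarrow> nat \<Rightarrow> nat" and \<pi> :: "nat \<Rightarrow> real"
    and M :: "nat \<Rightarrow> 'a measure"
    and V :: "nat \<Rightarrow> nat \<Rightarrow> nat \<Rightarrow> nat \<Rightarrow> 'a \<Rightarrow> real"
    and C :: "nat \<Rightarrow> nat \<Rightarrow> nat \<Rightarrow> nat \<Rightarrow> nat \<Rightarrow> 'a \<Rightarrow> bool"
    and \<mu> :: "nat \<Rightarrow> nat \<Rightarrow> real" and s :: "nat \<Rightarrow> real"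
  assumes m: "m \<ge> 1"
    and N_pos: "\<And>nu i. i \<in> {1..m} \<Longrightarrow> N nu i \<ge> 1"
    and pi_pos: "\<And>i. i \<in> {1..m} \<Longrightarrow> \<pi> i > 0"
    and model: "\<And>nu. epidemic_model m N (M nu) V C nu"
    and N_inf: "filterlim (\<lambda>nu. Ntot m N nu) at_top sequentially"
    and pi_lim: "\<And>i. i \<in> {1..m} \<Longrightarrow> (\<lambda>nu. real (N nu i) / real (Ntot m N nu)) \<longlonglongrightarrow> \<pi> i"
    and mu_nonneg: "\<And>i k. i \<in> {1..m} \<Longrightarrow> k \<in> {1..m} \<Longrightarrow> \<mu> i k \<ge> 0"
    and mu_lim: "\<And>i k. i \<in> {1..m} \<Longrightarrow> k \<in> {1..m} \<Longrightarrow>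
       (\<lambda>nu. real (Ntot m N nu) * prob_space.expectation (M nu) (V nu i 1 k)) \<longlonglongrightarrow> \<mu> i k"
    and var_lim: "\<And>i k. i \<in> {1..m} \<Longrightarrow> k \<in> {1..m} \<Longrightarrow>
       (\<lambda>nu. real (Ntot m N nu) * prob_space.variance (M nu) (V nu i 1 k)) \<longlonglongrightarrow> 0"
    and s_nonneg: "\<And>k. k \<in> {1..m} \<Longrightarrow> s k \<ge> 0"
  shows "(\<forall>i\<in>{1..m}. conv_prob_zero M (\<lambda>nu \<omega>. SUP t\<in>Dbox m s.
            \<bar>Xcount m N \<pi> C nu i t \<omega> / Ntil m N \<pi> nu i - rfun m \<pi> \<mu> i t\<bar>))
       \<and> conv_prob_zero M (\<lambda>nu \<omega>. SUP t\<in>Dbox m s.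
            sqrt (\<Sum>i\<in>{1..m}. (Xcount m N \<pi> C nu i t \<omega> / (real (Ntot m N nu) * \<pi> i)
                                - rfun m \<pi> \<mu> i t)\<^sup>2))"
proof -
  interpret E: epi m N \<pi> M V C \<mu>
    by (rule epi.intro) (fact m N_pos pi_pos model N_inf pi_lim mu_nonneg mu_lim var_lim)+
  have P1: "conv_prob_zero M (\<lambda>nu \<omega>. SUP t\<in>Dbox m s. \<bar>Xcount m N \<pi> C nu i t \<omega> / Ntil m N \<pi> nu i - rfun m \<pi> \<mu> i t\<bar>)"
    if i: "i \<in> {1..m}" for i
    unfolding conv_prob_zero_def
  proof (intro allI impI conjI)
    fix \<epsilon> :: real and nu assume e: "\<epsilon> > 0"
    have "{\<omega>\<in>space (M nu). \<epsilon> < \<bar>SUP t\<in>Dbox m s. E.fi i nu t \<omega>\<bar>} \<in> sets (M nu)"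
      by (rule E.Y1_meas[OF i]) (rule s_nonneg)
    then show "{\<omega>\<in>space (M nu). \<epsilon> < \<bar>SUP t\<in>Dbox m s. \<bar>Xcount m N \<pi> C nu i t \<omega> / Ntil m N \<pi> nu i - rfun m \<pi> \<mu> i t\<bar>\<bar>} \<in> sets (M nu)"
      unfolding E.fi_def .
  next
    fix \<epsilon> :: real assume e: "\<epsilon> > 0"
    show "(\<lambda>nu. measure (M nu) {\<omega>\<in>space (M nu). \<epsilon> < \<bar>SUP t\<in>Dbox m s. \<bar>Xcount m N \<pi> C nu i t \<omega> / Ntil m N \<pi> nu i - rfun m \<pi> \<mu> i t\<bar>\<bar>}) \<longlonglongrightarrow> 0"
    proof -
      have "(\<lambda>nu. measure (M nu) {\<omega>\<in>space (M nu). \<epsilon> < \<bar>SUP t\<in>Dbox m s. E.fi i nu t \<omega>\<bar>}) \<longlonglongrightarrow> 0"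
        by (rule E.Y1_lim[OF i _ e]) (rule s_nonneg)
      then show ?thesis unfolding E.fi_def .
    qed
  qed
  have P2: "conv_prob_zero M (\<lambda>nu \<omega>. SUP t\<in>Dbox m s.
            sqrt (\<Sum>i\<in>{1..m}. (Xcount m N \<pi> C nu i t \<omega> / (real (Ntot m N nu) * \<pi> i)
                                - rfun m \<pi> \<mu> i t)\<^sup>2))"
    unfolding conv_prob_zero_def
  proof (intro allI impI conjI)
    fix \<epsilon> :: real and nu assume e: "\<epsilon> > 0"
    have "{\<omega>\<in>space (M nu). \<epsilon> < \<bar>SUP t\<in>Dbox m s. E.gv nu t \<omega>\<bar>} \<in> sets (M nu)"
      by (rule E.Y2_meas) (rule s_nonneg)
    then show "{\<omega>\<in>space (M nu). \<epsilon> < \<bar>SUP t\<in>Dbox m s. sqrt (\<Sum>i\<in>{1..m}. (Xcount m N \<pi> C nu i t \<omega> / (real (Ntot m N nu) * \<pi> i) - rfun m \<pi> \<mu> i t)\<^sup>2)\<bar>} \<in> sets (M nu)"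
      unfolding E.gv_def .
  next
    fix \<epsilon> :: real assume e: "\<epsilon> > 0"
    show "(\<lambda>nu. measure (M nu) {\<omega>\<in>space (M nu). \<epsilon> < \<bar>SUP t\<in>Dbox m s. sqrt (\<Sum>i\<in>{1..m}. (Xcount m N \<pi> C nu i t \<omega> / (real (Ntot m N nu) * \<pi> i) - rfun m \<pi> \<mu> i t)\<^sup>2)\<bar>}) \<longlonglongrightarrow> 0"
    proof -
      have "(\<lambda>nu. measure (M nu) {\<omega>\<in>space (M nu). \<epsilon> < \<bar>SUP t\<in>Dbox m s. E.gv nu t \<omega>\<bar>}) \<longlonglongrightarrow> 0"
        by (rule E.Y2_lim[OF _ e]) (rule s_nonneg)
      then show ?thesis unfolding E.gv_def .
    qed
  qed
  show ?thesis using P1 P2 by blast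
qed


end
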